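(* Let $R$ be a finitely generated standard algebra with a rate filtration $\mathbf F$ of some degree $d$ such that the set $\mathcal{H}$ of Hilbert series $\{I(z): I\in\mathbf F\}$ is finite. Then the Hilbert series $R(z)$ of $R$ and the Hilbert series $I(z)$ of every $I\in\mathbf F$ are rational functions. Moreover, if $\mathcal H$ contains exactly $s$ nonzero elements, then each of these rational functions can be written as a quotient of two polynomials with integer coefficients of degrees at most $ds$.
   Context: $R$ standard: graded, $R_0=k$, generated by $R_1$, finite-dimensional components, $R_+=\bigoplus_{i>0}R_i$. The Hilbert series of a graded space $V$ is $V(z)=\sum_j\dim V_j z^j$. For a homogeneous right ideal $J$, $m(J)$ is the maximal degree of a minimal homogeneous generator. A rate filtration is a set $\mathbf F$ of finitely generated homogeneous right ideals with $0,R_+\in\mathbf F$ such that for every $0\ne I\in\mathbf F$ there exist $J\in\mathbf F$, $J\ne I$, and a homogeneous $x\in I$ with $I=J+xR$, $m(J)\le m(I)$, and $(J:x)=\{a\in R: xa\in J\}\in\mathbf F$; it is of degree $d$ if $m(I)\le d$ for all $I\in\mathbf F$. *)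

theory Defs
  imports "HOL-Computational_Algebra.Polynomial_FPS"
begin

text \<open>
  Setting: a (not necessarily commutative) ring R, given as the whole type 'a :: ring_1,
  which is an algebra over a field k (type 'k) via the scalar multiplication scale,
  and graded by the family of k-subspaces Rg 0, Rg 1, Rg 2, ...
\<close>

definition k_algebra :: "('k::field \<Rightarrow> 'a::ring_1 \<Rightarrow> 'a) \<Rightarrow> bool" where
  "k_algebra scale \<longleftrightarrow> vector_space scale \<and>
     (\<forall>c x y. scale c (x * y) = scale c x * y \<and> scale c (x * y) = x * scale c y)"

definition graded_algebra :: "('k::field \<Rightarrow> 'a::ring_1 \<Rightarrow> 'a) \<Rightarrow> (nat \<Rightarrow> 'a set) \<Rightarrow> bool" where
  "graded_algebra scale Rg \<longleftrightarrow> k_algebra scale \<and>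
     (\<forall>i. module.subspace scale (Rg i)) \<and>
     (\<forall>i j x y. x \<in> Rg i \<longrightarrow> y \<in> Rg j \<longrightarrow> x * y \<in> Rg (i + j)) \<and>
     (\<forall>x. \<exists>n f. (\<forall>i. f i \<in> Rg i) \<and> x = (\<Sum>i<n. f i)) \<and>
     (\<forall>n f. (\<forall>i. f i \<in> Rg i) \<longrightarrow> (\<Sum>i<n. f i) = 0 \<longrightarrow> (\<forall>i<n. f i = 0))"

definition standard_algebra :: "('k::field \<Rightarrow> 'a::ring_1 \<Rightarrow> 'a) \<Rightarrow> (nat \<Rightarrow> 'a set) \<Rightarrow> bool" where
  "standard_algebra scale Rg \<longleftrightarrow> graded_algebra scale Rg \<and>
     Rg 0 = range (\<lambda>c. scale c 1) \<and>
     (\<forall>n. Rg (Suc n) = module.span scale {x * y | x y. x \<in> Rg n \<and> y \<in> Rg 1}) \<and>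
     (\<forall>n. \<exists>B. finite B \<and> module.span scale B = Rg n)"

definition homogeneous_elt :: "(nat \<Rightarrow> 'a::ring_1 set) \<Rightarrow> 'a \<Rightarrow> bool" where
  "homogeneous_elt Rg x \<longleftrightarrow> (\<exists>j. x \<in> Rg j)"

text \<open>Degree of a nonzero homogeneous element.\<close>
definition hdeg :: "(nat \<Rightarrow> 'a::ring_1 set) \<Rightarrow> 'a \<Rightarrow> nat" where
  "hdeg Rg x = (THE j. x \<in> Rg j)"

definition R_plus :: "(nat \<Rightarrow> 'a::ring_1 set) \<Rightarrow> 'a set" where
  "R_plus Rg = {x. \<exists>n f. (\<forall>i. f i \<in> Rg (Suc i)) \<and> x = (\<Sum>i<n. f i)}"

definition right_ideal :: "'a::ring_1 set \<Rightarrow> bool" where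
  "right_ideal I \<longleftrightarrow> 0 \<in> I \<and> (\<forall>x\<in>I. \<forall>y\<in>I. x + y \<in> I) \<and> (\<forall>x\<in>I. - x \<in> I) \<and>
     (\<forall>x\<in>I. \<forall>a. x * a \<in> I)"

definition rideal_gen :: "'a::ring_1 set \<Rightarrow> 'a set" where
  "rideal_gen G = \<Inter>{I. right_ideal I \<and> G \<subseteq> I}"

definition hom_right_ideal :: "(nat \<Rightarrow> 'a::ring_1 set) \<Rightarrow> 'a set \<Rightarrow> bool" where
  "hom_right_ideal Rg I \<longleftrightarrow> right_ideal I \<and>
     (\<forall>x\<in>I. \<exists>n f. (\<forall>i. f i \<in> Rg i \<inter> I) \<and> x = (\<Sum>i<n. f i))"

definition fin_gen :: "'a::ring_1 set \<Rightarrow> bool" where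
  "fin_gen I \<longleftrightarrow> (\<exists>G. finite G \<and> I = rideal_gen G)"

definition min_hom_gens :: "(nat \<Rightarrow> 'a::ring_1 set) \<Rightarrow> 'a set \<Rightarrow> 'a set \<Rightarrow> bool" where
  "min_hom_gens Rg J G \<longleftrightarrow> (\<forall>g\<in>G. homogeneous_elt Rg g) \<and> rideal_gen G = J \<and>
     (\<forall>g\<in>G. rideal_gen (G - {g}) \<noteq> J)"

definition mdeg :: "(nat \<Rightarrow> 'a::ring_1 set) \<Rightarrow> 'a set \<Rightarrow> nat" where
  "mdeg Rg J = Max (insert 0 (hdeg Rg ` (SOME G. min_hom_gens Rg J G)))"

definition colon :: "'a::ring_1 set \<Rightarrow> 'a \<Rightarrow> 'a set" where
  "colon J x = {a. x * a \<in> J}"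

definition rate_filtration :: "(nat \<Rightarrow> 'a::ring_1 set) \<Rightarrow> 'a set set \<Rightarrow> bool" where
  "rate_filtration Rg F \<longleftrightarrow>
     (\<forall>I\<in>F. fin_gen I \<and> hom_right_ideal Rg I) \<and> {0} \<in> F \<and> R_plus Rg \<in> F \<and>
     (\<forall>I\<in>F. I \<noteq> {0} \<longrightarrow>
        (\<exists>J\<in>F. \<exists>x. J \<noteq> I \<and> homogeneous_elt Rg x \<and> x \<in> I \<and>
           I = {j + x * a | j a. j \<in> J} \<and> mdeg Rg J \<le> mdeg Rg I \<and> colon J x \<in> F))"

definition rate_filtration_of_degree :: "(nat \<Rightarrow> 'a::ring_1 set) \<Rightarrow> 'a set set \<Rightarrow> nat \<Rightarrow> bool" where
  "rate_filtration_of_degree Rg F d \<longleftrightarrow> rate_filtration Rg F \<and> (\<forall>I\<in>F. mdeg Rg I \<le> d)"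

text \<open>Hilbert series of a graded subspace V (V = I for an ideal, V = UNIV for R itself).\<close>
definition hilbert_series :: "('k::field \<Rightarrow> 'a::ring_1 \<Rightarrow> 'a) \<Rightarrow> (nat \<Rightarrow> 'a set) \<Rightarrow> 'a set \<Rightarrow> int fps" where
  "hilbert_series scale Rg V = Abs_fps (\<lambda>j. int (vector_space.dim scale (V \<inter> Rg j)))"

end

theory Submission
  imports Defs "Jordan_Normal_Form.Determinant"
begin

no_notation vec_index (infixl \<open>$\<close> 100)
notation fps_nth (infixl \<open>$\<close> 75)


context vector_space begin

lemma my_basis:
  assumes "subspace V" "V \<subseteq> span S" "finite S"
  obtains B where "finite B" "B \<subseteq> V" "independent B" "span B = V" "card B = dim V"
proof -
  obtain B where B: "B \<subseteq> V" "independent B" "V \<subseteq> span B" "card B = dim V"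
    using basis_exists by blast
  have "finite B" using independent_span_bound[OF assms(3) B(2)] B(1) assms(2) by blast
  moreover have "span B = V" using B assms(1) span_subspace by blast
  ultimately show ?thesis using that B by blast
qed

lemma my_dim_mono:
  assumes "subspace U" "subspace W" "U \<subseteq> W" "W \<subseteq> span S" "finite S"
  shows "dim U \<le> dim W"
proof -
  obtain BU where BU: "finite BU" "BU \<subseteq> U" "independent BU" "span BU = U" "card BU = dim U"
    using my_basis[of U S] assms by blast
  obtain BW where BW: "finite BW" "BW \<subseteq> W" "independent BW" "span BW = W" "card BW = dim W"
    using my_basis[of W S] assms by blast
  have "card BU \<le> card BW" using independent_span_bound[OF BW(1) BU(3)] BU(2) assms(3) BW(4) by blast
  then show ?thesis using BU BW by simp
qed

lemma my_dim_eq: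
  assumes "subspace U" "subspace W" "U \<subseteq> W" "W \<subseteq> span S" "finite S" "dim U = dim W"
  shows "U = W"
proof (rule ccontr)
  assume ne: "U \<noteq> W"
  then obtain w where w: "w \<in> W" "w \<notin> U" using assms(3) by blast
  obtain BU where BU: "finite BU" "BU \<subseteq> U" "independent BU" "span BU = U" "card BU = dim U"
    using my_basis[of U S] assms by blast
  obtain BW where BW: "finite BW" "BW \<subseteq> W" "independent BW" "span BW = W" "card BW = dim W"
    using my_basis[of W S] assms by blast
  have ind: "independent (insert w BU)" using independent_insertI[of w BU] BU w by auto
  have "insert w BU \<subseteq> span BW" using BW BU w assms(3) by auto
  then have "card (insert w BU) \<le> card BW" using independent_span_bound[OF BW(1) ind] by blast
  moreover have "w \<notin> BU" using BU w span_superset by blast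
  then have "card (insert w BU) = card BU + 1" using BU by auto
  ultimately show False using BU BW assms(6) by simp
qed

lemma my_dim_insert:
  assumes "subspace U" "U \<subseteq> span S" "finite S" "v \<notin> U"
  shows "dim (span (insert v U)) = dim U + 1"
proof -
  obtain BU where BU: "finite BU" "BU \<subseteq> U" "independent BU" "span BU = U" "card BU = dim U"
    using my_basis[of U S] assms by blast
  have ind: "independent (insert v BU)" using independent_insertI[of v BU] BU assms by auto
  have "span (insert v BU) = span (insert v U)"
  proof
    show "span (insert v BU) \<subseteq> span (insert v U)" using BU by (intro span_mono) auto
    show "span (insert v U) \<subseteq> span (insert v BU)"
      by (metis BU(4) insert_mono span_minimal span_superset subspace_span span_mono insert_subset
          span_base insertI1)
  qed
  then have "dim (span (insert v U)) = card (insert v BU)"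
    by (metis dim_span dim_eq_card_independent ind)
  moreover have "v \<notin> BU" using BU assms(4) span_superset by blast
  ultimately show ?thesis using BU by auto
qed

lemma my_dim_zero: "dim {0} = 0"
  using dim_eq_card[of "{}" "{0}"] independent_empty by simp

lemma my_dimf:
  assumes lin: "\<And>c u. f (scale c u) = scale c (f u)"
    and add: "\<And>u v. f (u + v) = f u + f v"
    and sJ: "subspace J" and sA: "subspace A"
    and fJ: "J \<subseteq> span SJ" "finite SJ" and fA: "A \<subseteq> span SA" "finite SA"
  shows "dim {j + f a | j a. j \<in> J \<and> a \<in> A} + dim {a \<in> A. f a \<in> J} = dim J + dim A"
proof -
  have f0: "f 0 = 0" using add[of 0 0] by simp
  have fminus: "f (u - v) = f u - f v" for u v using add[of "u - v" v] by simp
  have linf: "Vector_Spaces.linear scale scale f"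
    by (simp add: Vector_Spaces.linear_iff vector_space_axioms lin add)
  have mh: "module_hom scale scale f" using linf module_hom_iff_linear by blast
  define K where "K = {a \<in> A. f a \<in> J}"
  have sK: "subspace K" unfolding K_def subspace_def
    using sA sJ f0 add lin by (auto simp: subspace_def)
  have KA: "K \<subseteq> A" unfolding K_def by auto
  obtain BK where BK: "finite BK" "BK \<subseteq> K" "independent BK" "span BK = K" "card BK = dim K"
    using my_basis[of K SA] sK KA fA by blast
  obtain BA where BA: "BK \<subseteq> BA" "BA \<subseteq> A" "independent BA" "A \<subseteq> span BA"
    using maximal_independent_subset_extend[of BK A] BK KA by blast
  have fBA: "finite BA" using independent_span_bound[OF fA(2) BA(3)] BA fA by blast
  have cBA: "card BA = dim A" using basis_card_eq_dim BA by blast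
  define P where "P = BA - BK"
  define T where "T Q = {j + f a | j a. j \<in> J \<and> a \<in> span (BK \<union> Q)}" for Q
  have spA: "span (BK \<union> Q) \<subseteq> A" if "Q \<subseteq> P" for Q
    using that BA sA unfolding P_def by (intro span_minimal) auto
  have sT: "subspace (T Q)" if "Q \<subseteq> P" for Q
    unfolding T_def subspace_def
  proof (intro conjI allI impI ballI)
    show "0 \<in> {j + f a |j a. j \<in> J \<and> a \<in> span (BK \<union> Q)}"
      using f0 sJ span_zero by (auto simp: subspace_def intro!: exI[of _ 0])
  next
    fix x y assume "x \<in> {j + f a |j a. j \<in> J \<and> a \<in> span (BK \<union> Q)}"
      "y \<in> {j + f a |j a. j \<in> J \<and> a \<in> span (BK \<union> Q)}"
    then obtain j1 a1 j2 a2 where "x = j1 + f a1" "j1 \<in> J" "a1 \<in> span (BK \<union> Q)"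
      "y = j2 + f a2" "j2 \<in> J" "a2 \<in> span (BK \<union> Q)" by blast
    moreover have "x + y = (j1 + j2) + f (a1 + a2)" using calculation add by (simp add: algebra_simps)
    moreover have "j1 + j2 \<in> J" using calculation sJ by (simp add: subspace_def)
    moreover have "a1 + a2 \<in> span (BK \<union> Q)" using calculation span_add by blast
    ultimately show "x + y \<in> {j + f a |j a. j \<in> J \<and> a \<in> span (BK \<union> Q)}" by blast
  next
    fix c x assume "x \<in> {j + f a |j a. j \<in> J \<and> a \<in> span (BK \<union> Q)}"
    then obtain j1 a1 where "x = j1 + f a1" "j1 \<in> J" "a1 \<in> span (BK \<union> Q)" by blast
    moreover have "scale c x = scale c j1 + f (scale c a1)" using calculation lin by (simp add: scale_right_distrib)
    moreover have "scale c j1 \<in> J" using calculation sJ by (simp add: subspace_def)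
    moreover have "scale c a1 \<in> span (BK \<union> Q)" using calculation span_scale by blast
    ultimately show "scale c x \<in> {j + f a |j a. j \<in> J \<and> a \<in> span (BK \<union> Q)}" by blast
  qed
  have TS: "T Q \<subseteq> span (SJ \<union> f ` (BK \<union> Q))" for Q
  proof
    fix x assume "x \<in> T Q"
    then obtain j a where x: "x = j + f a" "j \<in> J" "a \<in> span (BK \<union> Q)" unfolding T_def by blast
    have "j \<in> span (SJ \<union> f ` (BK \<union> Q))" using x fJ span_mono[of SJ] by blast
    moreover have "f a \<in> span (f ` (BK \<union> Q))" using x module_hom.span_image[OF mh] by blast
    then have "f a \<in> span (SJ \<union> f ` (BK \<union> Q))" using span_mono[of "f ` (BK \<union> Q)"] by blast
    ultimately show "x \<in> span (SJ \<union> f ` (BK \<union> Q))" using x span_add by blast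
  qed
  have fP: "finite P" using fBA unfolding P_def by simp
  have main: "finite Q \<Longrightarrow> Q \<subseteq> P \<Longrightarrow> dim (T Q) = dim J + card Q" for Q
  proof (induction Q rule: finite_induct)
    case empty
    have "T {} = J"
    proof
      show "T {} \<subseteq> J"
      proof
        fix x assume "x \<in> T {}"
        then obtain j a where x: "x = j + f a" "j \<in> J" "a \<in> span BK" unfolding T_def by auto
        then have "f a \<in> J" using BK unfolding K_def by auto
        then show "x \<in> J" using x sJ by (simp add: subspace_def)
      qed
      show "J \<subseteq> T {}"
      proof
        fix x assume "x \<in> J"
        moreover have "x = x + f 0" using f0 by simp
        moreover have "(0::'b) \<in> span (BK \<union> {})" using span_zero by blast
        ultimately show "x \<in> T {}" unfolding T_def by blast
      qed
    qed
    then show ?case by simp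
  next
    case (insert p Q)
    have QP: "Q \<subseteq> P" "p \<in> P" using insert by auto
    let ?v = "f p"
    have eqT: "T (insert p Q) = span (insert ?v (T Q))"
    proof
      show "T (insert p Q) \<subseteq> span (insert ?v (T Q))"
      proof
        fix x assume "x \<in> T (insert p Q)"
        then obtain j a where x: "x = j + f a" "j \<in> J" "a \<in> span (insert p (BK \<union> Q))"
          unfolding T_def by auto
        then obtain k where k: "a - scale k p \<in> span (BK \<union> Q)" using span_insert by blast
        have "x - scale k ?v = j + f (a - scale k p)" using x fminus[of a "scale k p"] lin by (simp add: algebra_simps)
        then have "x - scale k ?v \<in> T Q" unfolding T_def using x k by blast
        then have "x - scale k ?v \<in> span (T Q)" using span_base by blast
        then show "x \<in> span (insert ?v (T Q))" using span_insert by blast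
      qed
      show "span (insert ?v (T Q)) \<subseteq> T (insert p Q)"
      proof
        fix x assume "x \<in> span (insert ?v (T Q))"
        then obtain k where "x - scale k ?v \<in> span (T Q)" using span_insert by blast
        then have "x - scale k ?v \<in> T Q" using sT[OF QP(1)] span_eq_iff by blast
        then obtain j a where ja: "x - scale k ?v = j + f a" "j \<in> J" "a \<in> span (BK \<union> Q)"
          unfolding T_def by blast
        have "x = j + f (a + scale k p)" using ja add lin by (simp add: algebra_simps)
        moreover have "a + scale k p \<in> span (insert p (BK \<union> Q))"
          using ja span_insert[of p "BK \<union> Q"] by (auto intro!: exI[of _ k])
        ultimately show "x \<in> T (insert p Q)" unfolding T_def using ja(2) by auto
      qed
    qed
    have vnot: "?v \<notin> T Q"
    proof
      assume "?v \<in> T Q"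
      then obtain j a where ja: "f p = j + f a" "j \<in> J" "a \<in> span (BK \<union> Q)" unfolding T_def by blast
      have "f (p - a) = j" using ja fminus by simp
      moreover have "p - a \<in> A" using spA[OF QP(1)] ja QP BA sA unfolding P_def
        by (auto simp: subspace_def intro!: subspace_diff[OF sA])
      ultimately have "p - a \<in> K" using ja unfolding K_def by auto
      then have "p - a \<in> span (BK \<union> Q)" using BK span_mono[of BK "BK \<union> Q"] by auto
      then have "p \<in> span (BK \<union> Q)" using ja span_add[of "p - a" _ a] by auto
      moreover have "BK \<union> Q \<subseteq> BA - {p}" using QP insert(2) BA unfolding P_def by auto
      ultimately have "p \<in> span (BA - {p})" using span_mono by blast
      moreover have "p \<in> BA" using QP unfolding P_def by auto
      ultimately show False using BA(3) dependent_def by blast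
    qed
    have "dim (T (insert p Q)) = dim (T Q) + 1"
      unfolding eqT
      by (rule my_dim_insert[OF sT[OF QP(1)] TS]) (use fJ BK insert vnot in auto)
    then show ?case using insert by simp
  qed
  have TP: "T P = {j + f a | j a. j \<in> J \<and> a \<in> A}"
  proof -
    have "span (BK \<union> P) = A"
      using spA[of P] BA unfolding P_def
      by (metis Diff_partition order_refl subset_antisym span_superset)
    then show ?thesis unfolding T_def by simp
  qed
  have "card P = card BA - card BK" unfolding P_def using BA BK fBA by (simp add: card_Diff_subset)
  moreover have "card BK \<le> card BA" using BA BK fBA card_mono by blast
  ultimately show ?thesis using main[OF fP] TP BK cBA K_def by simp
qed

end


lemma sum_extend_zero:
  fixes f :: "nat \<Rightarrow> 'b::comm_monoid_add"
  assumes "\<forall>i\<ge>N. f i = 0" "N \<le> L"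
  shows "(\<Sum>i<L. f i) = (\<Sum>i<N. f i)"
  using assms by (intro sum.mono_neutral_right) auto

locale stdalg =
  fixes scale :: "'k::field \<Rightarrow> 'a::ring_1 \<Rightarrow> 'a" and Rg :: "nat \<Rightarrow> 'a set"
  assumes std: "standard_algebra scale Rg"
begin

lemma VS: "vector_space scale"
  using std unfolding standard_algebra_def graded_algebra_def k_algebra_def by blast

sublocale vs: vector_space scale by (rule VS)

lemma smul1: "scale c (x * y) = scale c x * y"
  using std unfolding standard_algebra_def graded_algebra_def k_algebra_def by blast
lemma smul2: "scale c (x * y) = x * scale c y"
  using std unfolding standard_algebra_def graded_algebra_def k_algebra_def by blast
lemma scale_as_mul: "scale c x = x * scale c 1"
  using smul2[of c x 1] by simp
lemma subRg: "vs.subspace (Rg i)"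
  using std unfolding standard_algebra_def graded_algebra_def by blast
lemma mulRg: "x \<in> Rg i \<Longrightarrow> y \<in> Rg j \<Longrightarrow> x * y \<in> Rg (i + j)"
  using std unfolding standard_algebra_def graded_algebra_def by blast
lemma decomp: "\<exists>n f. (\<forall>i. f i \<in> Rg i) \<and> x = (\<Sum>i<n. f i)"
  using std unfolding standard_algebra_def graded_algebra_def by blast
lemma uniq: "(\<forall>i. f i \<in> Rg i) \<Longrightarrow> (\<Sum>i<n. f i) = 0 \<Longrightarrow> i < n \<Longrightarrow> f i = 0"
  using std unfolding standard_algebra_def graded_algebra_def by blast
lemma Rg0: "Rg 0 = range (\<lambda>c. scale c 1)"
  using std unfolding standard_algebra_def by blast
lemma finRg: "\<exists>B. finite B \<and> vs.span B = Rg n"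
  using std unfolding standard_algebra_def by blast

lemma zeroRg: "0 \<in> Rg i" using subRg vs.subspace_0 by blast

lemma dec_unique:
  assumes "\<forall>i. f i \<in> Rg i" "\<forall>i\<ge>N. f i = 0" "\<forall>i. g i \<in> Rg i" "\<forall>i\<ge>M. g i = 0"
    "(\<Sum>i<N. f i) = (\<Sum>i<M. g i)"
  shows "f = g"
proof
  fix i
  define L where "L = max N M"
  have "(\<Sum>i<L. f i) = (\<Sum>i<N. f i)" using sum_extend_zero[of N f L] assms unfolding L_def by simp
  moreover have "(\<Sum>i<L. g i) = (\<Sum>i<M. g i)" using sum_extend_zero[of M g L] assms unfolding L_def by simp
  ultimately have "(\<Sum>i<L. f i - g i) = 0" using assms(5) by (simp add: sum_subtractf)
  moreover have "\<forall>i. f i - g i \<in> Rg i" using assms subRg vs.subspace_diff by blast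
  ultimately have "i < L \<Longrightarrow> f i - g i = 0" using uniq[of "\<lambda>i. f i - g i" L i] by blast
  then show "f i = g i" using assms unfolding L_def by (cases "i < L") (auto simp: L_def)
qed

definition comp :: "'a \<Rightarrow> nat \<Rightarrow> 'a" where
  "comp x = (SOME f. (\<forall>i. f i \<in> Rg i) \<and> (\<exists>N. (\<forall>i\<ge>N. f i = 0) \<and> x = (\<Sum>i<N. f i)))"

lemma comp_ex: "\<exists>f. (\<forall>i. f i \<in> Rg i) \<and> (\<exists>N. (\<forall>i\<ge>N. f i = 0) \<and> x = (\<Sum>i<N. f i))"
proof -
  obtain n f where f: "\<forall>i. f i \<in> Rg i" "x = (\<Sum>i<n. f i)" using decomp by blast
  define g where "g i = (if i < n then f i else 0)" for i
  have "\<forall>i. g i \<in> Rg i" using f zeroRg unfolding g_def by auto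
  moreover have "\<forall>i\<ge>n. g i = 0" unfolding g_def by auto
  moreover have "x = (\<Sum>i<n. g i)" using f unfolding g_def by simp
  ultimately show ?thesis by blast
qed

lemma comp_spec: "(\<forall>i. comp x i \<in> Rg i) \<and> (\<exists>N. (\<forall>i\<ge>N. comp x i = 0) \<and> x = (\<Sum>i<N. comp x i))"
  unfolding comp_def using someI_ex[OF comp_ex[of x]] .

lemma comp_Rg: "comp x i \<in> Rg i" using comp_spec by blast

lemma comp_sum_large: "\<exists>N. \<forall>L\<ge>N. x = (\<Sum>i<L. comp x i)"
proof -
  obtain N where N: "\<forall>i\<ge>N. comp x i = 0" "x = (\<Sum>i<N. comp x i)" using comp_spec by blast
  have "\<forall>L\<ge>N. x = (\<Sum>i<L. comp x i)"
  proof (intro allI impI)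
    fix L assume "N \<le> L"
    then show "x = (\<Sum>i<L. comp x i)" using sum_extend_zero[of N "comp x" L] N by simp
  qed
  then show ?thesis by blast
qed

lemma comp_eq:
  assumes "\<forall>i. f i \<in> Rg i" "\<forall>i\<ge>N. f i = 0" "x = (\<Sum>i<N. f i)"
  shows "comp x = f"
proof -
  obtain M where M: "\<forall>i\<ge>M. comp x i = 0" "x = (\<Sum>i<M. comp x i)" using comp_spec by blast
  show ?thesis by (rule dec_unique[of "comp x" M f N]) (use M assms comp_Rg in auto)
qed

lemma comp_add: "comp (x + y) i = comp x i + comp y i"
proof -
  obtain N where N: "\<forall>i\<ge>N. comp x i = 0" "x = (\<Sum>i<N. comp x i)" using comp_spec by blast
  obtain M where M: "\<forall>i\<ge>M. comp y i = 0" "y = (\<Sum>i<M. comp y i)" using comp_spec by blast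
  define L where "L = max N M"
  have "x = (\<Sum>i<L. comp x i)" using N sum_extend_zero[of N "comp x" L] unfolding L_def by simp
  moreover have "y = (\<Sum>i<L. comp y i)" using M sum_extend_zero[of M "comp y" L] unfolding L_def by simp
  ultimately have "x + y = (\<Sum>i<L. comp x i + comp y i)" by (simp add: sum.distrib)
  moreover have "\<forall>i. comp x i + comp y i \<in> Rg i" using comp_Rg subRg vs.subspace_add by blast
  moreover have "\<forall>i\<ge>L. comp x i + comp y i = 0" using N M unfolding L_def by auto
  ultimately have "comp (x + y) = (\<lambda>i. comp x i + comp y i)" by (intro comp_eq) auto
  then show ?thesis by simp
qed

lemma comp_scale: "comp (scale c x) i = scale c (comp x i)"
proof -
  obtain N where N: "\<forall>i\<ge>N. comp x i = 0" "x = (\<Sum>i<N. comp x i)" using comp_spec by blast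
  have "scale c x = scale c (\<Sum>i<N. comp x i)" using N by simp
  also have "\<dots> = (\<Sum>i<N. scale c (comp x i))" by (rule vs.scale_sum_right)
  finally have "scale c x = (\<Sum>i<N. scale c (comp x i))" .
  moreover have "\<forall>i. scale c (comp x i) \<in> Rg i" using comp_Rg subRg vs.subspace_scale by blast
  moreover have "\<forall>i\<ge>N. scale c (comp x i) = 0" using N by auto
  ultimately have "comp (scale c x) = (\<lambda>i. scale c (comp x i))" by (intro comp_eq) auto
  then show ?thesis by simp
qed

lemma comp_hom: "y \<in> Rg n \<Longrightarrow> comp y i = (if i = n then y else 0)"
proof -
  assume y: "y \<in> Rg n"
  have "comp y = (\<lambda>i. if i = n then y else 0)"
  proof (rule comp_eq[where N = "Suc n"])
    show "\<forall>i. (if i = n then y else 0) \<in> Rg i" using y zeroRg by auto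
    show "\<forall>i\<ge>Suc n. (if i = n then y else 0) = 0" by auto
    show "y = (\<Sum>i<Suc n. if i = n then y else 0)" by (simp add: sum.delta)
  qed
  then show ?thesis by simp
qed

lemma hom_deg_unique: "x \<in> Rg i \<Longrightarrow> x \<in> Rg j \<Longrightarrow> x \<noteq> 0 \<Longrightarrow> i = j"
  using comp_hom[of x i i] comp_hom[of x j i] by (auto split: if_splits)

lemma hdeg_eq: "x \<in> Rg i \<Longrightarrow> x \<noteq> 0 \<Longrightarrow> hdeg Rg x = i"
  unfolding hdeg_def by (rule the_equality) (use hom_deg_unique in blast)+

lemma comp_mul:
  assumes x: "x \<in> Rg e"
  shows "comp (x * a) i = (if e \<le> i then x * comp a (i - e) else 0)"
proof -
  obtain N where N: "\<forall>i\<ge>N. comp a i = 0" "a = (\<Sum>i<N. comp a i)" using comp_spec by blast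
  define g where "g i = (if e \<le> i then x * comp a (i - e) else 0)" for i
  have gR: "\<forall>i. g i \<in> Rg i"
  proof
    fix i show "g i \<in> Rg i"
      using mulRg[OF x comp_Rg[of a "i - e"]] zeroRg unfolding g_def by auto
  qed
  have g0: "\<forall>i\<ge>N + e. g i = 0" using N unfolding g_def by auto
  have "x * a = (\<Sum>i<N. x * comp a i)" using N by (metis sum_distrib_left)
  also have "\<dots> = (\<Sum>i<N. g (i + e))" unfolding g_def by simp
  also have "\<dots> = sum g ((\<lambda>i. i + e) ` {..<N})" by (subst sum.reindex) (auto simp: inj_on_def)
  also have "\<dots> = (\<Sum>i<N + e. g i)"
  proof (rule sum.mono_neutral_left)
    show "(\<lambda>i. i + e) ` {..<N} \<subseteq> {..<N + e}" by auto
    show "\<forall>i\<in>{..<N + e} - (\<lambda>i. i + e) ` {..<N}. g i = 0"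
    proof
      fix i assume i: "i \<in> {..<N + e} - (\<lambda>i. i + e) ` {..<N}"
      have "\<not> e \<le> i"
      proof
        assume "e \<le> i"
        then have "i = (i - e) + e" "i - e < N" using i by auto
        then show False using i by blast
      qed
      then show "g i = 0" unfolding g_def by simp
    qed
  qed auto
  finally have "comp (x * a) = g" using comp_eq gR g0 by blast
  then show ?thesis unfolding g_def by simp
qed

lemma comp_zero: "comp 0 i = 0" using comp_hom[OF zeroRg[of 0]] by simp

lemma comp_minus: "comp (- x) i = - comp x i"
proof -
  have "comp x i + comp (- x) i = 0" using comp_add[of x "- x" i] comp_zero by simp
  from add.inverse_unique[OF this] show ?thesis by simp
qed

lemma comp_diff: "comp (x - y) i = comp x i - comp y i"
  using comp_add[of x "- y" i] comp_minus by simp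

end



lemma ri_0: "right_ideal I \<Longrightarrow> 0 \<in> I" unfolding right_ideal_def by blast
lemma ri_add: "right_ideal I \<Longrightarrow> x \<in> I \<Longrightarrow> y \<in> I \<Longrightarrow> x + y \<in> I" unfolding right_ideal_def by blast
lemma ri_neg: "right_ideal I \<Longrightarrow> x \<in> I \<Longrightarrow> - x \<in> I" unfolding right_ideal_def by blast
lemma ri_mul: "right_ideal I \<Longrightarrow> x \<in> I \<Longrightarrow> x * a \<in> I" unfolding right_ideal_def by blast
lemma ri_diff: "right_ideal I \<Longrightarrow> x \<in> I \<Longrightarrow> y \<in> I \<Longrightarrow> x - y \<in> I"
  using ri_add[of I x "- y"] ri_neg[of I y] by simp
lemma ri_sum: "right_ideal I \<Longrightarrow> (\<And>a. a \<in> A \<Longrightarrow> f a \<in> I) \<Longrightarrow> sum f A \<in> I"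
proof (induction A rule: infinite_finite_induct)
  case (infinite A) then show ?case using ri_0 by simp
next
  case empty then show ?case using ri_0 by simp
next
  case (insert a A)
  then have "f a \<in> I" "sum f A \<in> I" by auto
  then have "f a + sum f A \<in> I" by (rule ri_add[OF insert.prems(1)])
  then show ?case using insert.hyps by simp
qed
lemma ri_UNIV: "right_ideal UNIV" unfolding right_ideal_def by simp

lemma rg_ideal: "right_ideal (rideal_gen G)"
  unfolding rideal_gen_def right_ideal_def by blast
lemma rg_sup: "G \<subseteq> rideal_gen G"
  unfolding rideal_gen_def by blast
lemma rg_min: "right_ideal I \<Longrightarrow> G \<subseteq> I \<Longrightarrow> rideal_gen G \<subseteq> I"
  unfolding rideal_gen_def by blast
lemma rg_mono: "G \<subseteq> G' \<Longrightarrow> rideal_gen G \<subseteq> rideal_gen G'"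
  using rg_min[OF rg_ideal, of G G'] rg_sup[of G'] by blast

lemma rg_fin:
  assumes "y \<in> rideal_gen G"
  shows "\<exists>G'. finite G' \<and> G' \<subseteq> G \<and> y \<in> rideal_gen G'"
proof -
  define S where "S = {y. \<exists>G'. finite G' \<and> G' \<subseteq> G \<and> y \<in> rideal_gen G'}"
  have "right_ideal S" unfolding right_ideal_def
  proof (intro conjI ballI allI)
    show "0 \<in> S" unfolding S_def using ri_0[OF rg_ideal] by blast
  next
    fix x y assume "x \<in> S" "y \<in> S"
    then obtain G1 G2 where "finite G1" "G1 \<subseteq> G" "x \<in> rideal_gen G1"
      "finite G2" "G2 \<subseteq> G" "y \<in> rideal_gen G2" unfolding S_def by blast
    moreover have "rideal_gen G1 \<subseteq> rideal_gen (G1 \<union> G2)" "rideal_gen G2 \<subseteq> rideal_gen (G1 \<union> G2)"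
      by (rule rg_mono, blast)+
    ultimately have "x \<in> rideal_gen (G1 \<union> G2)" "y \<in> rideal_gen (G1 \<union> G2)"
      "finite (G1 \<union> G2)" "G1 \<union> G2 \<subseteq> G" by blast+
    then show "x + y \<in> S" unfolding S_def using ri_add[OF rg_ideal] by blast
  next
    fix x assume "x \<in> S"
    then show "- x \<in> S" unfolding S_def using ri_neg[OF rg_ideal] by blast
  next
    fix x a assume "x \<in> S"
    then show "x * a \<in> S" unfolding S_def using ri_mul[OF rg_ideal] by blast
  qed
  moreover have "G \<subseteq> S"
  proof
    fix g assume "g \<in> G"
    then show "g \<in> S" unfolding S_def using rg_sup[of "{g}"] by (intro CollectI exI[of _ "{g}"]) auto
  qed
  ultimately have "rideal_gen G \<subseteq> S" by (rule rg_min)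
  then show ?thesis using assms unfolding S_def by blast
qed

lemma rg_del0: "rideal_gen (G - {0}) = rideal_gen G"
proof
  show "rideal_gen (G - {0}) \<subseteq> rideal_gen G" by (rule rg_mono) auto
  have "G \<subseteq> rideal_gen (G - {0})" using rg_sup[of "G - {0}"] ri_0[OF rg_ideal] by blast
  then show "rideal_gen G \<subseteq> rideal_gen (G - {0})" by (rule rg_min[OF rg_ideal])
qed

lemma colon_ideal: "right_ideal J \<Longrightarrow> right_ideal (colon J x)"
  unfolding colon_def right_ideal_def by (auto simp: distrib_left mult.assoc[symmetric])

context stdalg begin

lemma ri_scale: "right_ideal I \<Longrightarrow> x \<in> I \<Longrightarrow> scale c x \<in> I"
  using ri_mul[of I x "scale c 1"] scale_as_mul[of c x] by simp

lemma ri_sub: "right_ideal I \<Longrightarrow> vs.subspace (I \<inter> Rg n)"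
proof -
  assume ri: "right_ideal I"
  show ?thesis unfolding vs.subspace_def
  proof (intro conjI ballI allI)
    show "0 \<in> I \<inter> Rg n" using ri_0[OF ri] zeroRg by blast
  next
    fix x y assume "x \<in> I \<inter> Rg n" "y \<in> I \<inter> Rg n"
    then show "x + y \<in> I \<inter> Rg n" using ri_add[OF ri] vs.subspace_add[OF subRg] by blast
  next
    fix c x assume "x \<in> I \<inter> Rg n"
    then show "scale c x \<in> I \<inter> Rg n" using ri_scale[OF ri] vs.subspace_scale[OF subRg] by blast
  qed
qed

lemma fdim: "\<exists>S. finite S \<and> Rg n \<subseteq> vs.span S"
  using finRg[of n] by blast

lemma hom_comp: "hom_right_ideal Rg I \<Longrightarrow> x \<in> I \<Longrightarrow> comp x i \<in> I"
proof -
  assume h: "hom_right_ideal Rg I" and x: "x \<in> I"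
  then obtain n f where f: "\<forall>i. f i \<in> Rg i \<inter> I" "x = (\<Sum>i<n. f i)"
    unfolding hom_right_ideal_def by blast
  have ri: "right_ideal I" using h unfolding hom_right_ideal_def by blast
  define g where "g i = (if i < n then f i else 0)" for i
  have "comp x = g"
  proof (rule comp_eq[where N = n])
    show "\<forall>i. g i \<in> Rg i" using f zeroRg unfolding g_def by simp
    show "\<forall>i\<ge>n. g i = 0" unfolding g_def by simp
    show "x = (\<Sum>i<n. g i)" using f(2) unfolding g_def by simp
  qed
  moreover have "g i \<in> I" using f ri_0[OF ri] unfolding g_def by simp
  ultimately show ?thesis by simp
qed

lemma hom_ri: "hom_right_ideal Rg I \<Longrightarrow> right_ideal I"
  unfolding hom_right_ideal_def by blast

lemma hom_UNIV: "hom_right_ideal Rg UNIV"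
  unfolding hom_right_ideal_def by (simp add: ri_UNIV decomp)

lemma hom_sub:
  assumes "hom_right_ideal Rg I" "right_ideal J" "\<And>n. I \<inter> Rg n \<subseteq> J"
  shows "I \<subseteq> J"
proof
  fix y assume y: "y \<in> I"
  obtain N where N: "\<forall>L\<ge>N. y = (\<Sum>i<L. comp y i)" using comp_sum_large by blast
  have "\<And>i. comp y i \<in> J"
  proof -
    fix i have "comp y i \<in> I \<inter> Rg i" using hom_comp[OF assms(1) y] comp_Rg by blast
    then show "comp y i \<in> J" using assms(3) by blast
  qed
  then have "(\<Sum>i<N. comp y i) \<in> J" by (rule ri_sum[OF assms(2)])
  then show "y \<in> J" using N by simp
qed

lemma Rplus_comp0: "x \<in> R_plus Rg \<Longrightarrow> comp x 0 = 0"
proof -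
  assume "x \<in> R_plus Rg"
  then have "\<exists>n f. (\<forall>i. f i \<in> Rg (Suc i)) \<and> x = (\<Sum>i<n. f i)" unfolding R_plus_def by simp
  then obtain n f where f: "\<forall>i. f i \<in> Rg (Suc i)" "x = (\<Sum>i<n. f i)" by blast
  define g where "g j = (if j = 0 then 0 else if j - 1 < n then f (j - 1) else 0)" for j
  have "comp x = g"
  proof (rule comp_eq[where N = "Suc n"])
    show "\<forall>i. g i \<in> Rg i"
    proof
      fix i show "g i \<in> Rg i"
      proof (cases i)
        case 0 then show ?thesis using zeroRg unfolding g_def by simp
      next
        case (Suc m) then show ?thesis using f zeroRg unfolding g_def by simp
      qed
    qed
    show "\<forall>i\<ge>Suc n. g i = 0" unfolding g_def by auto
    have "(\<Sum>i<Suc n. g i) = g 0 + (\<Sum>i<n. g (Suc i))" by (rule sum.lessThan_Suc_shift)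
    also have "(\<Sum>i<n. g (Suc i)) = (\<Sum>i<n. f i)" by (rule sum.cong) (simp_all add: g_def)
    also have "g 0 = 0" by (simp add: g_def)
    also have "0 + (\<Sum>i<n. f i) = x" using f by simp
    finally show "x = (\<Sum>i<Suc n. g i)" by simp
  qed
  then show ?thesis unfolding g_def by simp
qed

lemma Rplus_Rg0: "R_plus Rg \<inter> Rg 0 = {0}"
proof
  show "R_plus Rg \<inter> Rg 0 \<subseteq> {0}"
  proof
    fix x assume x: "x \<in> R_plus Rg \<inter> Rg 0"
    then have "comp x 0 = 0" using Rplus_comp0 by blast
    moreover have "comp x 0 = x" using x comp_hom[of x 0 0] by simp
    ultimately show "x \<in> {0}" by simp
  qed
  have "\<exists>n f. (\<forall>i. f i \<in> Rg (Suc i)) \<and> (0::'a) = (\<Sum>i<n. f i)"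
    by (rule exI[of _ 0], rule exI[of _ "\<lambda>i. 0"]) (simp add: zeroRg)
  then have "0 \<in> R_plus Rg" unfolding R_plus_def by simp
  then show "{0} \<subseteq> R_plus Rg \<inter> Rg 0" using zeroRg by auto
qed

lemma Rg_Rplus: "n > 0 \<Longrightarrow> Rg n \<subseteq> R_plus Rg"
proof
  fix y assume n: "n > 0" and y: "y \<in> Rg n"
  then obtain m where m: "n = Suc m" using not0_implies_Suc by blast
  define f where "f i = (if i = m then y else 0)" for i
  have "\<forall>i. f i \<in> Rg (Suc i)" using y m zeroRg unfolding f_def by auto
  moreover have "y = (\<Sum>i<Suc m. f i)" unfolding f_def by (simp add: sum.delta)
  ultimately have "\<exists>n f. (\<forall>i. f i \<in> Rg (Suc i)) \<and> y = (\<Sum>i<n. f i)" by blast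
  then show "y \<in> R_plus Rg" unfolding R_plus_def by simp
qed

lemma hs_nth: "hilbert_series scale Rg V $ n = int (vs.dim (V \<inter> Rg n))"
  unfolding hilbert_series_def by simp

lemma hs_zero: "hilbert_series scale Rg {0} = 0"
proof -
  have "{0} \<inter> Rg n = {0}" for n using zeroRg by auto
  then show ?thesis by (simp add: fps_eq_iff hs_nth vs.my_dim_zero)
qed

lemma hs_UNIV: "hilbert_series scale Rg UNIV =
   fps_const (int (vs.dim (Rg 0))) + hilbert_series scale Rg (R_plus Rg)"
proof (rule fps_ext)
  fix n show "hilbert_series scale Rg UNIV $ n =
     (fps_const (int (vs.dim (Rg 0))) + hilbert_series scale Rg (R_plus Rg)) $ n"
  proof (cases "n = 0")
    case True then show ?thesis using Rplus_Rg0 by (simp add: hs_nth vs.my_dim_zero)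
  next
    case False
    then have "R_plus Rg \<inter> Rg n = Rg n" using Rg_Rplus by blast
    then show ?thesis using False by (simp add: hs_nth)
  qed
qed

lemma hs_dom:
  assumes J: "hom_right_ideal Rg J" and I: "hom_right_ideal Rg I" and JI: "J \<subseteq> I" "J \<noteq> I"
  shows "(\<forall>n. hilbert_series scale Rg J $ n \<le> hilbert_series scale Rg I $ n) \<and>
         hilbert_series scale Rg J \<noteq> hilbert_series scale Rg I"
proof
  have le: "vs.dim (J \<inter> Rg n) \<le> vs.dim (I \<inter> Rg n)" for n
  proof -
    obtain S where S: "finite S" "Rg n \<subseteq> vs.span S" using fdim by blast
    show ?thesis by (rule vs.my_dim_mono[of _ _ S]) (use ri_sub hom_ri J I JI S in auto)
  qed
  then show "\<forall>n. hilbert_series scale Rg J $ n \<le> hilbert_series scale Rg I $ n"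
    by (simp add: hs_nth)
  show "hilbert_series scale Rg J \<noteq> hilbert_series scale Rg I"
  proof
    assume eq: "hilbert_series scale Rg J = hilbert_series scale Rg I"
    have "I \<inter> Rg n \<subseteq> J" for n
    proof -
      obtain S where S: "finite S" "Rg n \<subseteq> vs.span S" using fdim by blast
      have "vs.dim (J \<inter> Rg n) = vs.dim (I \<inter> Rg n)"
        using arg_cong[OF eq, of "\<lambda>h. h $ n"] by (simp add: hs_nth)
      then have "J \<inter> Rg n = I \<inter> Rg n"
        by (intro vs.my_dim_eq[of _ _ S]) (use ri_sub hom_ri J I JI S in auto)
      then show ?thesis by blast
    qed
    then have "I \<subseteq> J" using hom_sub[OF I hom_ri[OF J]] by blast
    then show False using JI by blast
  qed
qed

lemma hs_step:
  assumes J: "hom_right_ideal Rg J" and x: "x \<in> Rg e"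
    and I: "I = {j + x * a | j a. j \<in> J}"
  shows "hilbert_series scale Rg I = hilbert_series scale Rg J +
     fps_X ^ e * (hilbert_series scale Rg UNIV - hilbert_series scale Rg (colon J x))"
proof (rule fps_ext)
  fix n
  have riJ: "right_ideal J" using hom_ri[OF J] .
  show "hilbert_series scale Rg I $ n = (hilbert_series scale Rg J +
     fps_X ^ e * (hilbert_series scale Rg UNIV - hilbert_series scale Rg (colon J x))) $ n"
  proof (cases "n < e")
    case True
    have "I \<inter> Rg n = J \<inter> Rg n"
    proof
      show "I \<inter> Rg n \<subseteq> J \<inter> Rg n"
      proof
        fix y assume y: "y \<in> I \<inter> Rg n"
        then obtain j a where ja: "y = j + x * a" "j \<in> J" using I by blast
        have "y = comp y n" using y comp_hom by auto
        also have "\<dots> = comp j n" using ja comp_add comp_mul[OF x] True by simp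
        finally show "y \<in> J \<inter> Rg n" using hom_comp[OF J ja(2)] y by auto
      qed
      show "J \<inter> Rg n \<subseteq> I \<inter> Rg n"
      proof
        fix y assume y: "y \<in> J \<inter> Rg n"
        then have "y = y + x * 0" "y \<in> J" by simp_all
        then have "y \<in> I" using I by blast
        then show "y \<in> I \<inter> Rg n" using y by blast
      qed
    qed
    then show ?thesis using True by (simp add: hs_nth fps_X_power_mult_nth)
  next
    case False
    obtain S1 where S1: "finite S1" "Rg n \<subseteq> vs.span S1" using fdim by blast
    obtain S2 where S2: "finite S2" "Rg (n - e) \<subseteq> vs.span S2" using fdim by blast
    have In: "I \<inter> Rg n = {j + x * a | j a. j \<in> J \<inter> Rg n \<and> a \<in> Rg (n - e)}"
    proof
      show "I \<inter> Rg n \<subseteq> {j + x * a | j a. j \<in> J \<inter> Rg n \<and> a \<in> Rg (n - e)}"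
      proof
        fix y assume y: "y \<in> I \<inter> Rg n"
        then obtain j a where ja: "y = j + x * a" "j \<in> J" using I by blast
        have "y = comp y n" using y comp_hom by auto
        also have "\<dots> = comp j n + x * comp a (n - e)" using ja comp_add comp_mul[OF x] False by simp
        finally show "y \<in> {j + x * a | j a. j \<in> J \<inter> Rg n \<and> a \<in> Rg (n - e)}"
          using hom_comp[OF J ja(2)] comp_Rg by blast
      qed
      show "{j + x * a | j a. j \<in> J \<inter> Rg n \<and> a \<in> Rg (n - e)} \<subseteq> I \<inter> Rg n"
      proof
        fix y assume "y \<in> {j + x * a | j a. j \<in> J \<inter> Rg n \<and> a \<in> Rg (n - e)}"
        then obtain j a where ja: "y = j + x * a" "j \<in> J" "j \<in> Rg n" "a \<in> Rg (n - e)" by blast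
        have "x * a \<in> Rg n" using mulRg[OF x ja(4)] False by simp
        then have "y \<in> Rg n" using ja subRg vs.subspace_add by blast
        moreover have "y \<in> I" using I ja by blast
        ultimately show "y \<in> I \<inter> Rg n" by blast
      qed
    qed
    have Kn: "{a \<in> Rg (n - e). x * a \<in> J \<inter> Rg n} = colon J x \<inter> Rg (n - e)"
      using mulRg[OF x] False unfolding colon_def by fastforce
    have "vs.dim {j + x * a | j a. j \<in> J \<inter> Rg n \<and> a \<in> Rg (n - e)} +
          vs.dim {a \<in> Rg (n - e). x * a \<in> J \<inter> Rg n} = vs.dim (J \<inter> Rg n) + vs.dim (Rg (n - e))"
    proof (rule vs.my_dimf)
      show "x * scale c u = scale c (x * u)" for c u using smul2 by simp
      show "x * (u + v) = x * u + x * v" for u v by (simp add: distrib_left)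
      show "vs.subspace (J \<inter> Rg n)" using ri_sub[OF riJ] .
      show "vs.subspace (Rg (n - e))" using subRg .
      show "J \<inter> Rg n \<subseteq> vs.span S1" using S1 by blast
      show "finite S1" using S1 by blast
      show "Rg (n - e) \<subseteq> vs.span S2" "finite S2" using S2 by blast+
    qed
    then have eqd: "vs.dim (I \<inter> Rg n) + vs.dim (colon J x \<inter> Rg (n - e)) =
        vs.dim (J \<inter> Rg n) + vs.dim (Rg (n - e))" using In Kn by simp
    have "vs.dim (colon J x \<inter> Rg (n - e)) \<le> vs.dim (Rg (n - e))"
      by (rule vs.my_dim_mono[of _ _ S2]) (use ri_sub[OF colon_ideal[OF riJ]] subRg S2 in auto)
    then show ?thesis using False eqd by (simp add: hs_nth fps_X_power_mult_nth)
  qed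
qed

end


context stdalg begin

lemma common_L: "finite A \<Longrightarrow> \<exists>L. \<forall>g\<in>A. g = (\<Sum>i<L. comp g i)"
proof -
  assume fA: "finite A"
  have "\<forall>g\<in>A. \<exists>N. \<forall>L\<ge>N. g = (\<Sum>i<L. comp g i)"
  proof
    fix g show "\<exists>N. \<forall>L\<ge>N. g = (\<Sum>i<L. comp g i)" by (rule comp_sum_large)
  qed
  from bchoice[OF this] obtain Nf where Nf: "\<forall>g\<in>A. \<forall>L\<ge>Nf g. g = (\<Sum>i<L. comp g i)" by (elim exE)
  have "\<forall>g\<in>A. g = (\<Sum>i<Max (insert 0 (Nf ` A)). comp g i)"
  proof
    fix g assume g: "g \<in> A"
    have "Nf g \<le> Max (insert 0 (Nf ` A))" using g fA by (intro Max_ge) auto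
    then show "g = (\<Sum>i<Max (insert 0 (Nf ` A)). comp g i)" using Nf g by simp
  qed
  then show ?thesis by blast
qed

lemma mhg_exists:
  assumes fg: "fin_gen I" and hI: "hom_right_ideal Rg I"
  shows "\<exists>G. min_hom_gens Rg I G"
proof -
  obtain G0 where G0: "finite G0" "I = rideal_gen G0" using fg unfolding fin_gen_def by blast
  obtain L where L: "\<forall>g\<in>G0. g = (\<Sum>i<L. comp g i)" using common_L[OF G0(1)] by blast
  define G1 where "G1 = (\<lambda>(g, i). comp g i) ` (G0 \<times> {..<L})"
  have fG1: "finite G1" unfolding G1_def using G0 by simp
  have G0I: "G0 \<subseteq> I" using G0 rg_sup by blast
  have G1I: "G1 \<subseteq> I" unfolding G1_def using G0I hom_comp[OF hI] by auto
  have G1h: "\<forall>g\<in>G1. homogeneous_elt Rg g" unfolding G1_def homogeneous_elt_def using comp_Rg by auto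
  have "rideal_gen G1 = I"
  proof
    show "rideal_gen G1 \<subseteq> I" using rg_min[OF hom_ri[OF hI] G1I] .
    have "G0 \<subseteq> rideal_gen G1"
    proof
      fix g assume g: "g \<in> G0"
      have "\<And>i. i \<in> {..<L} \<Longrightarrow> comp g i \<in> rideal_gen G1"
        using g rg_sup[of G1] unfolding G1_def by auto
      then have "(\<Sum>i<L. comp g i) \<in> rideal_gen G1" by (rule ri_sum[OF rg_ideal])
      then show "g \<in> rideal_gen G1" by (rule back_subst[of _ _ g]) (rule bspec[OF L g, symmetric])
    qed
    then show "I \<subseteq> rideal_gen G1" using G0(2) rg_min[OF rg_ideal] by blast
  qed
  define P where "P n \<longleftrightarrow> (\<exists>G. G \<subseteq> G1 \<and> rideal_gen G = I \<and> card G = n)" for n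
  have "P (card G1)" unfolding P_def using \<open>rideal_gen G1 = I\<close> by (intro exI[of _ G1]) simp
  then have "\<exists>n. P n" by (rule exI)
  then obtain n where n: "P n" "\<forall>m<n. \<not> P m" unfolding exists_least_iff[of P] by (elim exE conjE) simp
  from n(1) obtain G where G: "G \<subseteq> G1" "rideal_gen G = I" "card G = n" unfolding P_def by (elim exE conjE)
  have fG: "finite G" using G(1) fG1 by (rule finite_subset)
  have "min_hom_gens Rg I G" unfolding min_hom_gens_def
  proof (intro conjI ballI)
    fix g assume "g \<in> G" then show "homogeneous_elt Rg g" using G(1) G1h by blast
  next
    show "rideal_gen G = I" using G(2) .
  next
    fix g assume g: "g \<in> G"
    show "rideal_gen (G - {g}) \<noteq> I"
    proof
      assume a: "rideal_gen (G - {g}) = I"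
      have "G - {g} \<subseteq> G1" using G(1) by blast
      then have "P (card (G - {g}))" unfolding P_def using a by (intro exI[of _ "G - {g}"]) simp
      moreover have "card (G - {g}) < n" using card_Diff1_less[OF fG g] G(3) by simp
      ultimately show False using n(2) by blast
    qed
  qed
  then show ?thesis by (rule exI)
qed

lemma mhg_finite:
  assumes fg: "fin_gen I" and mhg: "min_hom_gens Rg I G"
  shows "finite G"
proof -
  obtain G0 where G0: "finite G0" "I = rideal_gen G0" using fg unfolding fin_gen_def by blast
  have GI: "rideal_gen G = I" and irr: "\<forall>g\<in>G. rideal_gen (G - {g}) \<noteq> I"
    using mhg unfolding min_hom_gens_def by blast+
  have "\<forall>g0\<in>G0. \<exists>G'. finite G' \<and> G' \<subseteq> G \<and> g0 \<in> rideal_gen G'"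
  proof
    fix g0 assume "g0 \<in> G0"
    then have "g0 \<in> rideal_gen G" using G0(2) GI rg_sup[of G0] by blast
    then show "\<exists>G'. finite G' \<and> G' \<subseteq> G \<and> g0 \<in> rideal_gen G'" by (rule rg_fin)
  qed
  from bchoice[OF this] obtain Gs where Gs: "\<forall>g0\<in>G0. finite (Gs g0) \<and> Gs g0 \<subseteq> G \<and> g0 \<in> rideal_gen (Gs g0)"
    by (elim exE)
  define G' where "G' = \<Union> (Gs ` G0)"
  have fG': "finite G'" unfolding G'_def using Gs G0 by auto
  have G'G: "G' \<subseteq> G" unfolding G'_def using Gs by auto
  have "G0 \<subseteq> rideal_gen G'"
  proof
    fix g0 assume g0: "g0 \<in> G0"
    then have "Gs g0 \<subseteq> G'" unfolding G'_def by auto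
    then show "g0 \<in> rideal_gen G'" using Gs g0 rg_mono by blast
  qed
  then have IG': "I \<subseteq> rideal_gen G'" using G0(2) rg_min[OF rg_ideal] by blast
  have "G = G'"
  proof (rule ccontr)
    assume "G \<noteq> G'"
    then obtain g where g: "g \<in> G" "g \<notin> G'" using G'G by blast
    then have "rideal_gen G' \<subseteq> rideal_gen (G - {g})" using G'G by (intro rg_mono) auto
    moreover have "rideal_gen (G - {g}) \<subseteq> I" using GI rg_mono[of "G - {g}" G] by blast
    ultimately have "rideal_gen (G - {g}) = I" using IG' by blast
    then show False using irr g by blast
  qed
  then show ?thesis using fG' by simp
qed

lemma mdeg_bound:
  assumes fg: "fin_gen I" and hI: "hom_right_ideal Rg I" and hJ: "hom_right_ideal Rg J"
    and JI: "J \<noteq> I" and x: "x \<in> Rg e" and I: "I = {j + x * a | j a. j \<in> J}"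
  shows "e \<le> mdeg Rg I"
proof (rule ccontr)
  assume ne: "\<not> e \<le> mdeg Rg I"
  define G where "G = (SOME G. min_hom_gens Rg I G)"
  have mhg: "min_hom_gens Rg I G" unfolding G_def using someI_ex[OF mhg_exists[OF fg hI]] .
  have fG: "finite G" using mhg_finite[OF fg mhg] .
  have GI: "rideal_gen G = I" and irr: "\<forall>g\<in>G. rideal_gen (G - {g}) \<noteq> I"
    and hom: "\<forall>g\<in>G. homogeneous_elt Rg g"
    using mhg unfolding min_hom_gens_def by blast+
  have md: "mdeg Rg I = Max (insert 0 (hdeg Rg ` G))" unfolding mdeg_def G_def by simp
  have riJ: "right_ideal J" using hom_ri[OF hJ] .
  have "G \<subseteq> J"
  proof
    fix g assume g: "g \<in> G"
    obtain k where k: "g \<in> Rg k" using hom g unfolding homogeneous_elt_def by blast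
    have g0: "g \<noteq> 0"
    proof
      assume "g = 0"
      then have "rideal_gen (G - {g}) = I" using rg_del0[of G] GI by simp
      then show False using irr g by blast
    qed
    have "hdeg Rg g = k" using hdeg_eq[OF k g0] .
    then have "k \<le> mdeg Rg I" unfolding md using g fG by (intro Max_ge) auto
    then have ke: "k < e" using ne by simp
    have "g \<in> I" using g GI rg_sup by blast
    then obtain j a where ja: "g = j + x * a" "j \<in> J" using I by blast
    have "g = comp g k" using comp_hom[OF k] by simp
    also have "\<dots> = comp j k" using ja comp_add comp_mul[OF x] ke by simp
    finally show "g \<in> J" using hom_comp[OF hJ ja(2)] by simp
  qed
  then have IJ: "I \<subseteq> J" using GI rg_min[OF riJ] by blast
  have "J \<subseteq> I"
  proof
    fix j assume "j \<in> J"
    then have "j = j + x * 0" "j \<in> J" by simp_all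
    then show "j \<in> I" using I by blast
  qed
  then show False using IJ JI by blast
qed

end


lemma deg_det:
  fixes A :: "int poly mat"
  assumes A: "A \<in> carrier_mat n n" and deg: "\<And>i j. i < n \<Longrightarrow> j < n \<Longrightarrow> degree (A $$ (i, j)) \<le> d"
  shows "degree (det A) \<le> n * d"
proof -
  have "det A = (\<Sum>p\<in>{p. p permutes {0..<n}}. signof p * (\<Prod>i = 0..<n. A $$ (i, p i)))"
    using det_def'[OF A] .
  also have "degree \<dots> \<le> n * d"
  proof (rule degree_sum_le)
    show "finite {p. p permutes {0..<n}}" using finite_permutations by blast
  next
    fix p assume "p \<in> {p. p permutes {0..<n}}"
    then have p: "p permutes {0..<n}" by simp
    have "degree (signof p * (\<Prod>i = 0..<n. A $$ (i, p i)) :: int poly) \<le>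
          degree (signof p :: int poly) + degree (\<Prod>i = 0..<n. A $$ (i, p i))"
      by (rule degree_mult_le)
    moreover have "degree (signof p :: int poly) = 0" by (simp add: sign_def)
    moreover have "degree (\<Prod>i = 0..<n. A $$ (i, p i)) \<le> (\<Sum>i = 0..<n. degree (A $$ (i, p i)))"
      using degree_prod_sum_le[of "{0..<n}" "\<lambda>i. A $$ (i, p i)"] by (simp add: o_def)
    moreover have "(\<Sum>i = 0..<n. degree (A $$ (i, p i))) \<le> (\<Sum>i = 0..<n. d)"
    proof (rule sum_mono)
      fix i assume i: "i \<in> {0..<n}"
      then have "p i \<in> {0..<n}" using permutes_in_image[OF p] by simp
      then show "degree (A $$ (i, p i)) \<le> d" using deg i by simp
    qed
    ultimately show "degree (signof p * (\<Prod>i = 0..<n. A $$ (i, p i)) :: int poly) \<le> n * d"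
      by simp
  qed
  finally show ?thesis .
qed

lemma det_weight_one:
  fixes M :: "int mat" and w :: "nat \<Rightarrow> nat"
  assumes M: "M \<in> carrier_mat n n" and diag: "\<And>i. i < n \<Longrightarrow> M $$ (i, i) = 1"
    and off: "\<And>i j. i < n \<Longrightarrow> j < n \<Longrightarrow> i \<noteq> j \<Longrightarrow> M $$ (i, j) \<noteq> 0 \<Longrightarrow> w j < w i"
  shows "det M = 1"
proof -
  let ?S = "{p. p permutes {0..<n}}"
  let ?f = "\<lambda>p. signof p * (\<Prod>i = 0..<n. M $$ (i, p i)) :: int"
  have zero: "?f p = 0" if p: "p permutes {0..<n}" and pid: "p \<noteq> id" for p
  proof -
    have "\<exists>i. p i \<noteq> i" using pid by (metis eq_id_iff)
    then obtain i0 where i0: "p i0 \<noteq> i0" by blast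
    then have "i0 < n" using permutes_not_in[OF p] by (metis atLeastLessThan_iff zero_le)
    define Mv where "Mv = {i. i < n \<and> p i \<noteq> i}"
    have "i0 \<in> Mv" using i0 \<open>i0 < n\<close> unfolding Mv_def by simp
    then obtain i where i: "i \<in> Mv" and imin: "\<And>j. j \<in> Mv \<Longrightarrow> w i \<le> w j"
      using ex_has_least_nat[of "\<lambda>i. i \<in> Mv" i0 w] by blast
    have iin: "i < n" "p i \<noteq> i" using i unfolding Mv_def by auto
    have pin: "p i < n" using permutes_in_image[OF p] iin by simp
    have "p (p i) \<noteq> p i"
    proof
      assume "p (p i) = p i"
      then have "p i = i" using permutes_inj[OF p] by (simp add: inj_eq)
      then show False using iin by simp
    qed
    then have "p i \<in> Mv" using pin unfolding Mv_def by simp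
    then have "w i \<le> w (p i)" using imin by blast
    then have "M $$ (i, p i) = 0" using off[OF iin(1) pin] iin(2) by force
    then have "(\<Prod>i = 0..<n. M $$ (i, p i)) = 0" using iin(1) by (intro prod_zero) auto
    then show ?thesis by simp
  qed
  have "det M = sum ?f ?S" using det_def'[OF M] .
  also have "\<dots> = (\<Sum>p\<in>?S. if p = id then ?f id else 0)"
    by (rule sum.cong) (use zero in auto)
  also have "\<dots> = ?f id"
    using permutes_id[of "{0..<n}"] finite_permutations[of "{0..<n}"] by (simp add: sum.delta')
  also have "\<dots> = 1" using diag by (simp add: sign_id)
  finally show ?thesis .
qed

lemma solve_system:
  fixes A :: "int poly mat" and b :: "nat \<Rightarrow> int poly" and h :: "nat \<Rightarrow> int fps"
  assumes A: "A \<in> carrier_mat n n"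
    and sys: "\<And>i. i < n \<Longrightarrow> (\<Sum>j = 0..<n. fps_of_poly (A $$ (i, j)) * h j) = fps_of_poly (b i)"
    and degA: "\<And>i j. i < n \<Longrightarrow> j < n \<Longrightarrow> degree (A $$ (i, j)) \<le> d"
    and degb: "\<And>i. i < n \<Longrightarrow> degree (b i) \<le> d"
    and i: "i < n"
  shows "fps_of_poly (det A) * h i = fps_of_poly (\<Sum>j = 0..<n. adj_mat A $$ (i, j) * b j)
     \<and> degree (\<Sum>j = 0..<n. adj_mat A $$ (i, j) * b j) \<le> n * d"
proof
  let ?Ad = "adj_mat A"
  have adjc: "?Ad \<in> carrier_mat n n" using adj_mat(1)[OF A] .
  have adjA: "(\<Sum>j = 0..<n. ?Ad $$ (i, j) * A $$ (j, k)) = (if i = k then det A else 0)" if k: "k < n" for k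
  proof -
    have "(?Ad * A) $$ (i, k) = (det A \<cdot>\<^sub>m 1\<^sub>m n) $$ (i, k)" using adj_mat(3)[OF A] by simp
    moreover have "(?Ad * A) $$ (i, k) = (\<Sum>j = 0..<n. ?Ad $$ (i, j) * A $$ (j, k))"
      using adjc A i k by (simp add: scalar_prod_def)
    moreover have "(det A \<cdot>\<^sub>m 1\<^sub>m n) $$ (i, k) = (if i = k then det A else 0)"
      using i k by simp
    ultimately show ?thesis by simp
  qed
  have "(\<Sum>k = 0..<n. fps_of_poly (if i = k then det A else 0) * h k) =
        (\<Sum>k = 0..<n. if i = k then fps_of_poly (det A) * h k else 0)"
    by (rule sum.cong) auto
  also have "\<dots> = fps_of_poly (det A) * h i" using i by (simp add: sum.delta)
  finally have "fps_of_poly (det A) * h i =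
        (\<Sum>k = 0..<n. fps_of_poly (if i = k then det A else 0) * h k)" by simp
  also have "\<dots> = (\<Sum>k = 0..<n. (\<Sum>j = 0..<n. fps_of_poly (?Ad $$ (i, j)) * fps_of_poly (A $$ (j, k))) * h k)"
    by (rule sum.cong) (simp_all add: adjA[symmetric] fps_of_poly_sum fps_of_poly_mult)
  also have "\<dots> = (\<Sum>k = 0..<n. \<Sum>j = 0..<n. fps_of_poly (?Ad $$ (i, j)) * (fps_of_poly (A $$ (j, k)) * h k))"
    by (simp add: sum_distrib_right mult.assoc)
  also have "\<dots> = (\<Sum>j = 0..<n. \<Sum>k = 0..<n. fps_of_poly (?Ad $$ (i, j)) * (fps_of_poly (A $$ (j, k)) * h k))"
    by (rule sum.swap)
  also have "\<dots> = (\<Sum>j = 0..<n. fps_of_poly (?Ad $$ (i, j)) * fps_of_poly (b j))"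
    by (rule sum.cong) (simp_all add: sum_distrib_left[symmetric] sys)
  also have "\<dots> = fps_of_poly (\<Sum>j = 0..<n. ?Ad $$ (i, j) * b j)"
    by (simp add: fps_of_poly_sum fps_of_poly_mult)
  finally show "fps_of_poly (det A) * h i = fps_of_poly (\<Sum>j = 0..<n. ?Ad $$ (i, j) * b j)" .
  show "degree (\<Sum>j = 0..<n. ?Ad $$ (i, j) * b j) \<le> n * d"
  proof (rule degree_sum_le)
    fix j assume j: "j \<in> {0..<n}"
    have "?Ad $$ (i, j) = cofactor A j i" using A i j by (simp add: adj_mat_def)
    also have "\<dots> = (-1) ^ (j + i) * det (mat_delete A j i)" by (simp add: cofactor_def)
    finally have eq: "?Ad $$ (i, j) = (-1) ^ (j + i) * det (mat_delete A j i)" .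
    have "degree (det (mat_delete A j i)) \<le> (n - 1) * d"
    proof (rule deg_det)
      show "mat_delete A j i \<in> carrier_mat (n - 1) (n - 1)" using mat_delete_carrier[OF A] .
      fix i' j' assume "i' < n - 1" "j' < n - 1"
      then show "degree (mat_delete A j i $$ (i', j')) \<le> d"
        using A by (auto simp: mat_delete_def intro!: degA)
    qed
    then have "degree (?Ad $$ (i, j)) \<le> (n - 1) * d"
      unfolding eq by (cases "even (j + i)") simp_all
    moreover have "degree (b j) \<le> d" using degb j by simp
    ultimately have "degree (?Ad $$ (i, j) * b j) \<le> (n - 1) * d + d"
      using degree_mult_le[of "?Ad $$ (i, j)" "b j"] by simp
    also have "\<dots> = n * d" using i by (cases n) auto
    finally show "degree (?Ad $$ (i, j) * b j) \<le> n * d" .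
  qed simp
qed




lemma poly_det0: "poly (det (A :: int poly mat)) 0 = det (map_mat (\<lambda>p. poly p 0) A)"
proof -
  interpret ev: comm_ring_hom "\<lambda>p::int poly. poly p 0"
    by unfold_locales simp_all
  show ?thesis by simp
qed

locale mainctx = stdalg scale Rg for scale :: "'k::field \<Rightarrow> 'a::ring_1 \<Rightarrow> 'a" and Rg +
  fixes F :: "'a set set" and d :: nat
  assumes rf: "rate_filtration_of_degree Rg F d" and finH: "finite (hilbert_series scale Rg ` F)"
begin

abbreviation "hsr \<equiv> hilbert_series scale Rg"

lemma rfu: "(\<forall>I\<in>F. fin_gen I \<and> hom_right_ideal Rg I) \<and> {0} \<in> F \<and> R_plus Rg \<in> F \<and>
     (\<forall>I\<in>F. I \<noteq> {0} \<longrightarrow>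
        (\<exists>J\<in>F. \<exists>x. J \<noteq> I \<and> homogeneous_elt Rg x \<and> x \<in> I \<and>
           I = {j + x * a | j a. j \<in> J} \<and> mdeg Rg J \<le> mdeg Rg I \<and> colon J x \<in> F))"
  using rf unfolding rate_filtration_of_degree_def rate_filtration_def by (elim conjE) (intro conjI; assumption)
lemma FI: "I \<in> F \<Longrightarrow> fin_gen I \<and> hom_right_ideal Rg I"
  using conjunct1[OF rfu] by (rule bspec)
lemma F0: "{0} \<in> F"
  using rfu by (elim conjE)
lemma FRp: "R_plus Rg \<in> F"
  using rfu by (elim conjE)
lemma Fstep: "I \<in> F \<Longrightarrow> I \<noteq> {0} \<Longrightarrow> \<exists>J\<in>F. \<exists>x. J \<noteq> I \<and> homogeneous_elt Rg x \<and> x \<in> I \<and>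
           I = {j + x * a | j a. j \<in> J} \<and> mdeg Rg J \<le> mdeg Rg I \<and> colon J x \<in> F"
proof -
  assume a: "I \<in> F" "I \<noteq> {0}"
  have "\<forall>I\<in>F. I \<noteq> {0} \<longrightarrow>
        (\<exists>J\<in>F. \<exists>x. J \<noteq> I \<and> homogeneous_elt Rg x \<and> x \<in> I \<and>
           I = {j + x * a | j a. j \<in> J} \<and> mdeg Rg J \<le> mdeg Rg I \<and> colon J x \<in> F)"
    using rfu by (elim conjE)
  from mp[OF bspec[OF this a(1)] a(2)] show ?thesis .
qed
lemma Fmd: "I \<in> F \<Longrightarrow> mdeg Rg I \<le> d"
proof -
  have "\<forall>I\<in>F. mdeg Rg I \<le> d" using rf unfolding rate_filtration_of_degree_def by (elim conjE)
  then show "I \<in> F \<Longrightarrow> mdeg Rg I \<le> d" by (rule bspec)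
qed

definition "Hn = {h \<in> hsr ` F. h \<noteq> 0}"
definition "sN = card Hn"
definition "en = (SOME en. bij_betw en {0..<sN} Hn)"

lemma finHn: "finite Hn" unfolding Hn_def using finH by simp
lemma en_bij: "bij_betw en {0..<sN} Hn"
  unfolding en_def sN_def using someI_ex[OF ex_bij_betw_nat_finite[OF finHn]] .
lemma en_in: "i < sN \<Longrightarrow> en i \<in> Hn" using bij_betw_apply[OF en_bij, of i] by simp
lemma en_inj: "i < sN \<Longrightarrow> j < sN \<Longrightarrow> en i = en j \<Longrightarrow> i = j"
  using inj_onD[OF bij_betw_imp_inj_on[OF en_bij], of i j] by simp
lemma en_surj: "g \<in> Hn \<Longrightarrow> \<exists>i<sN. en i = g"
proof -
  assume "g \<in> Hn"
  then have "g \<in> en ` {0..<sN}" using bij_betw_imp_surj_on[OF en_bij] by simp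
  then obtain i where "i \<in> {0..<sN}" "g = en i" by (elim imageE)
  then show ?thesis by auto
qed

definition ind :: "int fps \<Rightarrow> nat \<Rightarrow> int poly" where
  "ind g j = (if j < sN \<and> en j = g then 1 else 0)"

lemma ind_sum: "g \<in> hsr ` F \<Longrightarrow> (\<Sum>j = 0..<sN. fps_of_poly (ind g j) * en j) = g"
proof -
  assume gF: "g \<in> hsr ` F"
  show ?thesis
  proof (cases "g \<in> Hn")
    case True
    then obtain i where i: "i < sN" "en i = g" using en_surj by blast
    have "(\<Sum>j = 0..<sN. fps_of_poly (ind g j) * en j) = (\<Sum>j = 0..<sN. if j = i then g else 0)"
    proof (rule sum.cong)
      fix j assume "j \<in> {0..<sN}"
      then have j: "j < sN" by simp
      show "fps_of_poly (ind g j) * en j = (if j = i then g else 0)"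
      proof (cases "j = i")
        case True then show ?thesis using i unfolding ind_def by simp
      next
        case False
        have "en j \<noteq> g"
        proof
          assume "en j = g"
          then have "en j = en i" using i(2) by simp
          then show False using en_inj[OF j i(1)] False by simp
        qed
        then show ?thesis using False unfolding ind_def by simp
      qed
    qed simp
    also have "\<dots> = g" using i by simp
    finally show ?thesis .
  next
    case False
    then have g0: "g = 0" using gF unfolding Hn_def by blast
    have "\<And>j. j < sN \<Longrightarrow> en j \<noteq> g" using en_in False by blast
    then have "\<And>j. ind g j = 0" unfolding ind_def by auto
    then show ?thesis using g0 by simp
  qed
qed

lemma degree_ind: "degree (ind g j) = 0" unfolding ind_def by simp
lemma poly_ind: "poly (ind g j) 0 = (if j < sN \<and> en j = g then 1 else 0)" unfolding ind_def by simp

lemma row_ex: "i < sN \<Longrightarrow> \<exists>I. I \<in> F \<and> hsr I = en i"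
proof -
  assume "i < sN"
  then have "en i \<in> hsr ` F" using en_in unfolding Hn_def by simp
  then obtain I where "I \<in> F" "en i = hsr I" by (elim imageE)
  then show ?thesis by auto
qed

definition "II i = (SOME I. I \<in> F \<and> hsr I = en i)"

lemma II: "i < sN \<Longrightarrow> II i \<in> F \<and> hsr (II i) = en i"
  unfolding II_def using someI_ex[OF row_ex] .

lemma II_ne0: "i < sN \<Longrightarrow> II i \<noteq> {0}"
proof
  assume i: "i < sN" and e: "II i = {0}"
  have "en i = 0" using II[OF i] e hs_zero by simp
  moreover have "en i \<noteq> 0" using en_in[OF i] unfolding Hn_def by blast
  ultimately show False by simp
qed

definition "PJ i J x e \<longleftrightarrow> J \<in> F \<and> J \<noteq> II i \<and> x \<in> Rg e \<and> II i = {j + x * a | j a. j \<in> J} \<and> colon J x \<in> F"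

lemma PJ_ex: "i < sN \<Longrightarrow> \<exists>J x e. PJ i J x e"
proof -
  assume i: "i < sN"
  from Fstep[OF conjunct1[OF II[OF i]] II_ne0[OF i]]
  obtain J x where Jx: "J \<in> F" "J \<noteq> II i" "homogeneous_elt Rg x"
     "II i = {j + x * a | j a. j \<in> J}" "colon J x \<in> F"
    by (elim bexE exE conjE)
  from Jx(3) obtain e where e: "x \<in> Rg e" unfolding homogeneous_elt_def by (elim exE)
  have "PJ i J x e" unfolding PJ_def using Jx e by (intro conjI)
  then show ?thesis by (intro exI)
qed

definition "JJ i = (SOME J. \<exists>x e. PJ i J x e)"
definition "XX i = (SOME x. \<exists>e. PJ i (JJ i) x e)"
definition "EE i = (SOME e. PJ i (JJ i) (XX i) e)"

lemma PJ: "i < sN \<Longrightarrow> PJ i (JJ i) (XX i) (EE i)"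
proof -
  assume i: "i < sN"
  have "\<exists>x e. PJ i (JJ i) x e" unfolding JJ_def using someI_ex[OF PJ_ex[OF i]] .
  then have "\<exists>e. PJ i (JJ i) (XX i) e" unfolding XX_def by (rule someI_ex)
  then show ?thesis unfolding EE_def by (rule someI_ex)
qed

definition "CC i = colon (JJ i) (XX i)"

lemma rowfacts:
  assumes i: "i < sN"
  shows "II i \<in> F" "JJ i \<in> F" "CC i \<in> F" "JJ i \<noteq> II i" "XX i \<in> Rg (EE i)"
    "II i = {j + XX i * a | j a. j \<in> JJ i}" "hsr (II i) = en i"
proof -
  have P: "PJ i (JJ i) (XX i) (EE i)" using PJ[OF i] .
  show "II i \<in> F" using II[OF i] by (elim conjE)
  show "hsr (II i) = en i" using II[OF i] by (elim conjE)
  show "JJ i \<in> F" using P unfolding PJ_def by (elim conjE)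
  show "CC i \<in> F" using P unfolding PJ_def CC_def by (elim conjE)
  show "JJ i \<noteq> II i" using P unfolding PJ_def by (elim conjE)
  show "XX i \<in> Rg (EE i)" using P unfolding PJ_def by (elim conjE)
  show "II i = {j + XX i * a | j a. j \<in> JJ i}" using P unfolding PJ_def by (elim conjE)
qed

lemma II_mem: "i < sN \<Longrightarrow> j \<in> JJ i \<Longrightarrow> j + XX i * a \<in> II i"
proof -
  assume i: "i < sN" and j: "j \<in> JJ i"
  have "j + XX i * a \<in> {j + XX i * a | j a. j \<in> JJ i}" using j by blast
  then show ?thesis by (subst rowfacts(6)[OF i])
qed

lemma II_dest: "i < sN \<Longrightarrow> y \<in> II i \<Longrightarrow> \<exists>j a. y = j + XX i * a \<and> j \<in> JJ i"
proof -
  assume i: "i < sN" and y: "y \<in> II i"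
  have "y \<in> {j + XX i * a | j a. j \<in> JJ i}" using y by (subst (asm) rowfacts(6)[OF i])
  then show ?thesis by simp
qed

lemma JJ_sub: "i < sN \<Longrightarrow> JJ i \<subseteq> II i"
proof
  fix j assume i: "i < sN" and j: "j \<in> JJ i"
  have "j + XX i * 0 \<in> II i" by (rule II_mem[OF i j])
  then show "j \<in> II i" by simp
qed

lemma EE_le: "i < sN \<Longrightarrow> EE i \<le> d"
proof -
  assume i: "i < sN"
  have F1: "fin_gen (II i)" "hom_right_ideal Rg (II i)" using FI[OF rowfacts(1)[OF i]] by blast+
  have F2: "hom_right_ideal Rg (JJ i)" using FI[OF rowfacts(2)[OF i]] by blast
  have "EE i \<le> mdeg Rg (II i)"
    by (rule mdeg_bound[OF F1 F2 rowfacts(4)[OF i] rowfacts(5)[OF i] rowfacts(6)[OF i]])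
  then show ?thesis using Fmd[OF rowfacts(1)[OF i]] by simp
qed

definition "c0 = int (vs.dim (Rg 0))"

lemma hs_UNIV': "hsr UNIV = fps_const c0 + hsr (R_plus Rg)"
  unfolding c0_def by (rule hs_UNIV)

lemma row_eq: "i < sN \<Longrightarrow> en i = hsr (JJ i) + fps_X ^ EE i * (hsr UNIV - hsr (CC i))"
proof -
  assume i: "i < sN"
  have F2: "hom_right_ideal Rg (JJ i)" using FI[OF rowfacts(2)[OF i]] by blast
  have "hsr (II i) = hsr (JJ i) + fps_X ^ EE i * (hsr UNIV - hsr (colon (JJ i) (XX i)))"
    by (rule hs_step[OF F2 rowfacts(5)[OF i] rowfacts(6)[OF i]])
  then show ?thesis using rowfacts(7)[OF i] unfolding CC_def by simp
qed

lemma XX_ne0: "i < sN \<Longrightarrow> XX i \<noteq> 0"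
proof
  assume i: "i < sN" and x0: "XX i = 0"
  have "II i = JJ i"
  proof
    show "JJ i \<subseteq> II i" using JJ_sub[OF i] .
    show "II i \<subseteq> JJ i"
    proof
      fix y assume "y \<in> II i"
      from II_dest[OF i this] obtain j a where "y = j + XX i * a" "j \<in> JJ i" by (elim exE conjE)
      then show "y \<in> JJ i" using x0 by simp
    qed
  qed
  then show False using rowfacts(4)[OF i] by simp
qed

lemma EE0_UNIV: "i < sN \<Longrightarrow> EE i = 0 \<Longrightarrow> II i = UNIV"
proof -
  assume i: "i < sN" and e0: "EE i = 0"
  have x: "XX i \<in> Rg 0" using rowfacts(5)[OF i] e0 by simp
  then have "XX i \<in> range (\<lambda>c. scale c 1)" using Rg0 by simp
  then obtain c where c: "XX i = scale c 1" by (elim rangeE)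
  have c0: "c \<noteq> 0" using XX_ne0[OF i] c by auto
  have riI: "right_ideal (II i)" using FI[OF rowfacts(1)[OF i]] hom_ri by blast
  have xI: "XX i \<in> II i"
  proof -
    have "0 \<in> JJ i" using FI[OF rowfacts(2)[OF i]] hom_ri ri_0 by blast
    then have "0 + XX i * 1 \<in> II i" by (rule II_mem[OF i])
    then show ?thesis by simp
  qed
  have "XX i * scale (inverse c) 1 = scale (inverse c) (XX i)" by (rule scale_as_mul[symmetric])
  also have "\<dots> = scale (inverse c * c) 1" using c by (simp add: vs.scale_scale)
  also have "\<dots> = 1" using c0 by simp
  finally have "1 \<in> II i" using ri_mul[OF riI xI, of "scale (inverse c) 1"] by simp
  then have "y \<in> II i" for y using ri_mul[OF riI, of 1 y] by simp
  then show ?thesis by blast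
qed

lemma Rp_ne_UNIV: "i < sN \<Longrightarrow> EE i = 0 \<Longrightarrow> R_plus Rg \<noteq> UNIV"
proof
  assume i: "i < sN" and e0: "EE i = 0" and eq: "R_plus Rg = UNIV"
  have "XX i \<in> R_plus Rg \<inter> Rg 0" using rowfacts(5)[OF i] e0 eq by simp
  then show False using Rplus_Rg0 XX_ne0[OF i] by blast
qed

end



context mainctx begin

definition "Sset = insert (hsr UNIV) (hsr ` F)"

lemma finS: "finite Sset" unfolding Sset_def using finH by simp

lemma hs_nonneg: "0 \<le> hsr V $ k" by (simp add: hs_nth)

lemma sep_N: "\<exists>N. \<forall>g\<in>Sset. \<forall>g'\<in>Sset. g \<noteq> g' \<longrightarrow> (\<exists>k<N. g $ k \<noteq> g' $ k)"
proof -
  have "\<forall>p\<in>Sset \<times> Sset. \<exists>k. fst p \<noteq> snd p \<longrightarrow> fst p $ k \<noteq> snd p $ k"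
  proof
    fix p :: "int fps \<times> int fps"
    show "\<exists>k. fst p \<noteq> snd p \<longrightarrow> fst p $ k \<noteq> snd p $ k"
    proof (cases "fst p = snd p")
      case True then show ?thesis by simp
    next
      case False
      then obtain k where "fst p $ k \<noteq> snd p $ k" using fps_ext by blast
      then show ?thesis by blast
    qed
  qed
  from bchoice[OF this] obtain kf where kf: "\<forall>p\<in>Sset \<times> Sset. fst p \<noteq> snd p \<longrightarrow> fst p $ kf p \<noteq> snd p $ kf p"
    by (elim exE)
  define N where "N = Suc (Max (insert 0 (kf ` (Sset \<times> Sset))))"
  have "\<forall>g\<in>Sset. \<forall>g'\<in>Sset. g \<noteq> g' \<longrightarrow> (\<exists>k<N. g $ k \<noteq> g' $ k)"
  proof (intro ballI impI)
    fix g g' assume g: "g \<in> Sset" "g' \<in> Sset" "g \<noteq> g'"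
    then have p: "(g, g') \<in> Sset \<times> Sset" by simp
    then have "g $ kf (g, g') \<noteq> g' $ kf (g, g')" using kf g(3) by force
    moreover have "kf (g, g') \<le> Max (insert 0 (kf ` (Sset \<times> Sset)))"
      using p finS by (intro Max_ge) auto
    then have "kf (g, g') < N" unfolding N_def by simp
    ultimately show "\<exists>k<N. g $ k \<noteq> g' $ k" by blast
  qed
  then show ?thesis by blast
qed

definition "NN = (SOME N. \<forall>g\<in>Sset. \<forall>g'\<in>Sset. g \<noteq> g' \<longrightarrow> (\<exists>k<N. g $ k \<noteq> g' $ k))"
definition "wt g = (\<Sum>k<NN. nat (g $ k))"

lemma NN: "\<forall>g\<in>Sset. \<forall>g'\<in>Sset. g \<noteq> g' \<longrightarrow> (\<exists>k<NN. g $ k \<noteq> g' $ k)"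
  unfolding NN_def by (rule someI_ex[OF sep_N])

lemma wt_less:
  assumes g: "g \<in> Sset" "g' \<in> Sset" and le: "\<forall>k. g $ k \<le> g' $ k" and ne: "g \<noteq> g'"
    and nn: "\<forall>k. 0 \<le> g $ k"
  shows "wt g < wt g'"
proof -
  obtain k where k: "k < NN" "g $ k \<noteq> g' $ k" using NN g ne by blast
  show ?thesis unfolding wt_def
  proof (rule sum_strict_mono_ex1)
    show "\<forall>x\<in>{..<NN}. nat (g $ x) \<le> nat (g' $ x)" using le by (simp add: nat_mono)
    have "g $ k < g' $ k" using le k by (simp add: order_le_neq_trans)
    then have "nat (g $ k) < nat (g' $ k)" using nn[rule_format, of k] by simp
    then show "\<exists>a\<in>{..<NN}. nat (g $ a) < nat (g' $ a)" using k by blast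
  qed simp
qed

lemma row_dom:
  assumes i: "i < sN"
  shows "EE i \<noteq> 0 \<Longrightarrow> wt (hsr (JJ i)) < wt (en i)"
    and "EE i = 0 \<Longrightarrow> wt (hsr (R_plus Rg)) < wt (en i)"
proof -
  assume e: "EE i \<noteq> 0"
  have hJ: "hom_right_ideal Rg (JJ i)" using FI[OF rowfacts(2)[OF i]] by blast
  have hI: "hom_right_ideal Rg (II i)" using FI[OF rowfacts(1)[OF i]] by blast
  have D: "(\<forall>n. hsr (JJ i) $ n \<le> hsr (II i) $ n) \<and> hsr (JJ i) \<noteq> hsr (II i)"
    by (rule hs_dom[OF hJ hI JJ_sub[OF i] rowfacts(4)[OF i]])
  have S: "hsr (JJ i) \<in> Sset" "hsr (II i) \<in> Sset"
    unfolding Sset_def using rowfacts(1,2)[OF i] by auto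
  have "wt (hsr (JJ i)) < wt (hsr (II i))"
    by (rule wt_less[OF S]) (use D hs_nonneg in auto)
  then show "wt (hsr (JJ i)) < wt (en i)" using rowfacts(7)[OF i] by simp
next
  assume e: "EE i = 0"
  have hR: "hom_right_ideal Rg (R_plus Rg)" using FI[OF FRp] by blast
  have D: "(\<forall>n. hsr (R_plus Rg) $ n \<le> hsr UNIV $ n) \<and> hsr (R_plus Rg) \<noteq> hsr UNIV"
    by (rule hs_dom[OF hR hom_UNIV _ Rp_ne_UNIV[OF i e]]) simp
  have S: "hsr (R_plus Rg) \<in> Sset" "hsr UNIV \<in> Sset"
    unfolding Sset_def using FRp by auto
  have "wt (hsr (R_plus Rg)) < wt (hsr UNIV)"
    by (rule wt_less[OF S]) (use D hs_nonneg in auto)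
  then show "wt (hsr (R_plus Rg)) < wt (en i)" using rowfacts(7)[OF i] EE0_UNIV[OF i e] by simp
qed

definition Aent :: "nat \<Rightarrow> nat \<Rightarrow> int poly" where
  "Aent i j = (if EE i = 0 then ind (en i) j - ind (hsr (R_plus Rg)) j
     else ind (en i) j - ind (hsr (JJ i)) j - monom 1 (EE i) * ind (hsr (R_plus Rg)) j
          + monom 1 (EE i) * ind (hsr (CC i)) j)"

definition bv :: "nat \<Rightarrow> int poly" where
  "bv i = (if EE i = 0 then [:c0:] else monom c0 (EE i))"

definition "AM = mat sN sN (\<lambda>(i, j). Aent i j)"

lemma AM_carrier: "AM \<in> carrier_mat sN sN" unfolding AM_def by simp
lemma AM_ent: "i < sN \<Longrightarrow> j < sN \<Longrightarrow> AM $$ (i, j) = Aent i j" unfolding AM_def by simp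

lemma en_F: "i < sN \<Longrightarrow> en i \<in> hsr ` F" using en_in unfolding Hn_def by blast

lemma sys: "i < sN \<Longrightarrow> (\<Sum>j = 0..<sN. fps_of_poly (AM $$ (i, j)) * en j) = fps_of_poly (bv i)"
proof -
  assume i: "i < sN"
  have eqs: "(\<Sum>j = 0..<sN. fps_of_poly (AM $$ (i, j)) * en j) = (\<Sum>j = 0..<sN. fps_of_poly (Aent i j) * en j)"
    by (rule sum.cong) (simp_all add: AM_ent i)
  let ?S = "\<lambda>g. (\<Sum>j = 0..<sN. fps_of_poly (ind g j) * en j)"
  have Si: "?S (en i) = en i" using ind_sum[OF en_F[OF i]] .
  have SR: "?S (hsr (R_plus Rg)) = hsr (R_plus Rg)" using ind_sum FRp by blast
  have SJ: "?S (hsr (JJ i)) = hsr (JJ i)" using ind_sum rowfacts(2)[OF i] by blast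
  have SC: "?S (hsr (CC i)) = hsr (CC i)" using ind_sum rowfacts(3)[OF i] by blast
  show ?thesis
  proof (cases "EE i = 0")
    case True
    have "(\<Sum>j = 0..<sN. fps_of_poly (Aent i j) * en j) = ?S (en i) - ?S (hsr (R_plus Rg))"
      using True by (simp add: Aent_def fps_of_poly_diff algebra_simps sum_subtractf)
    also have "\<dots> = fps_const c0"
    proof -
      have h: "fps_const c0 + hsr (R_plus Rg) = en i"
        using rowfacts(7)[OF i] EE0_UNIV[OF i True] hs_UNIV' by simp
      have "?S (en i) - ?S (hsr (R_plus Rg)) = en i - hsr (R_plus Rg)" using Si SR by simp
      also have "\<dots> = fps_const c0" using h by (metis add_diff_cancel)
      finally show ?thesis .
    qed
    finally show ?thesis using eqs True by (simp add: bv_def fps_of_poly_const)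
  next
    case False
    let ?m = "fps_X ^ EE i :: int fps"
    have "(\<Sum>j = 0..<sN. fps_of_poly (Aent i j) * en j) =
        ?S (en i) - ?S (hsr (JJ i)) - ?m * ?S (hsr (R_plus Rg)) + ?m * ?S (hsr (CC i))"
      using False by (simp add: Aent_def fps_of_poly_diff fps_of_poly_add fps_of_poly_mult
          fps_of_poly_monom' algebra_simps sum_subtractf sum.distrib sum_distrib_left)
    also have "\<dots> = en i - hsr (JJ i) - ?m * hsr (R_plus Rg) + ?m * hsr (CC i)"
      by (simp only: Si SR SJ SC)
    also have "\<dots> = ?m * fps_const c0"
      unfolding row_eq[OF i] hs_UNIV' by (simp add: algebra_simps)
    finally show ?thesis using eqs False by (simp add: bv_def fps_of_poly_monom mult.commute)
  qed
qed

lemma deg_Aent: "degree (Aent i j) \<le> EE i"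
proof (cases "EE i = 0")
  case True then show ?thesis by (simp add: Aent_def ind_def)
next
  case False
  have m: "degree (monom (1::int) (EE i) * ind g j) \<le> EE i" for g
    using degree_mult_le[of "monom (1::int) (EE i)" "ind g j"] degree_monom_le[of "1::int" "EE i"] degree_ind[of g j]
    by linarith
  have "degree (ind (en i) j - ind (hsr (JJ i)) j) \<le> EE i"
    by (rule degree_diff_le) (simp_all add: degree_ind)
  then have "degree (ind (en i) j - ind (hsr (JJ i)) j - monom 1 (EE i) * ind (hsr (R_plus Rg)) j) \<le> EE i"
    using m by (rule degree_diff_le)
  then have "degree (ind (en i) j - ind (hsr (JJ i)) j - monom 1 (EE i) * ind (hsr (R_plus Rg)) j
          + monom 1 (EE i) * ind (hsr (CC i)) j) \<le> EE i"
    using m by (rule degree_add_le)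
  then show ?thesis using False by (simp add: Aent_def)
qed

lemma deg_bv: "degree (bv i) \<le> EE i"
  unfolding bv_def using degree_monom_le by auto

lemma poly_Aent: "i < sN \<Longrightarrow> poly (Aent i j) 0 =
   (if j < sN \<and> en j = en i then 1 else 0) -
   (if EE i = 0 then (if j < sN \<and> en j = hsr (R_plus Rg) then 1 else 0)
    else (if j < sN \<and> en j = hsr (JJ i) then 1 else 0))"
  by (simp add: Aent_def poly_ind poly_monom)

lemma det_AM: "poly (det AM) 0 = 1"
proof -
  let ?M = "map_mat (\<lambda>p. poly p 0) AM"
  have Mc: "?M \<in> carrier_mat sN sN" using AM_carrier by simp
  have Ment: "i < sN \<Longrightarrow> j < sN \<Longrightarrow> ?M $$ (i, j) = poly (Aent i j) 0" for i j
    using AM_carrier by (simp add: AM_ent)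
  have "det ?M = 1"
  proof (rule det_weight_one[OF Mc, where w = "\<lambda>j. wt (en j)"])
    fix i assume i: "i < sN"
    show "?M $$ (i, i) = 1"
    proof (cases "EE i = 0")
      case True
      then have "en i \<noteq> hsr (R_plus Rg)" using row_dom(2)[OF i] by auto
      then show ?thesis using Ment[OF i i] poly_Aent[OF i, of i] i True by simp
    next
      case False
      then have "en i \<noteq> hsr (JJ i)" using row_dom(1)[OF i] by auto
      then show ?thesis using Ment[OF i i] poly_Aent[OF i, of i] i False by simp
    qed
  next
    fix i j assume i: "i < sN" and j: "j < sN" and ij: "i \<noteq> j" and nz: "?M $$ (i, j) \<noteq> 0"
    have "en j \<noteq> en i" using en_inj[OF j i] ij by auto
    then have nz': "poly (Aent i j) 0 \<noteq> 0" using nz Ment[OF i j] by simp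
    show "wt (en j) < wt (en i)"
    proof (cases "EE i = 0")
      case True
      then have "en j = hsr (R_plus Rg)" using nz' poly_Aent[OF i, of j] \<open>en j \<noteq> en i\<close> j
        by (auto split: if_splits)
      then show ?thesis using row_dom(2)[OF i True] by simp
    next
      case False
      then have "en j = hsr (JJ i)" using nz' poly_Aent[OF i, of j] \<open>en j \<noteq> en i\<close> j
        by (auto split: if_splits)
      then show ?thesis using row_dom(1)[OF i False] by simp
    qed
  qed
  then show ?thesis using poly_det0[of AM] by simp
qed

lemma solve_row:
  assumes i: "i < sN"
  shows "\<exists>p. fps_of_poly (det AM) * en i = fps_of_poly p \<and> degree p \<le> d * sN"
proof -
  have "fps_of_poly (det AM) * en i = fps_of_poly (\<Sum>j = 0..<sN. adj_mat AM $$ (i, j) * bv j)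
     \<and> degree (\<Sum>j = 0..<sN. adj_mat AM $$ (i, j) * bv j) \<le> sN * d"
  proof (rule solve_system[OF AM_carrier])
    show "\<And>i. i < sN \<Longrightarrow> (\<Sum>j = 0..<sN. fps_of_poly (AM $$ (i, j)) * en j) = fps_of_poly (bv i)"
      by (rule sys)
    show "\<And>i j. i < sN \<Longrightarrow> j < sN \<Longrightarrow> degree (AM $$ (i, j)) \<le> d"
      using deg_Aent EE_le AM_ent order_trans by metis
    show "\<And>i. i < sN \<Longrightarrow> degree (bv i) \<le> d"
      using deg_bv EE_le order_trans by metis
  qed (rule i)
  then show ?thesis by (auto simp: mult.commute)
qed

lemma deg_detAM: "degree (det AM) \<le> d * sN"
proof -
  have "degree (det AM) \<le> sN * d"
    by (rule deg_det[OF AM_carrier]) (use deg_Aent EE_le AM_ent order_trans in metis)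
  then show ?thesis by (simp add: mult.commute)
qed

lemma detAM_ne0: "det AM \<noteq> 0" using det_AM by auto

lemma main_loc:
  "\<forall>H \<in> insert (hsr UNIV) (hsr ` F).
      \<exists>p q :: int poly. q \<noteq> 0 \<and> fps_of_poly q * H = fps_of_poly p \<and>
        degree p \<le> d * sN \<and> degree q \<le> d * sN"
proof
  fix H assume H: "H \<in> insert (hsr UNIV) (hsr ` F)"
  have inF: "\<exists>p q :: int poly. q \<noteq> 0 \<and> fps_of_poly q * G = fps_of_poly p \<and>
        degree p \<le> d * sN \<and> degree q \<le> d * sN" if G: "G \<in> hsr ` F" for G
  proof (cases "G = 0")
    case True
    then show ?thesis by (intro exI[of _ 0] exI[of _ 1]) simp
  next
    case False
    then have "G \<in> Hn" using G unfolding Hn_def by blast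
    then obtain i where i: "i < sN" "en i = G" using en_surj by blast
    obtain p where p: "fps_of_poly (det AM) * en i = fps_of_poly p" "degree p \<le> d * sN"
      using solve_row[OF i(1)] by blast
    show ?thesis using p i detAM_ne0 deg_detAM by blast
  qed
  show "\<exists>p q :: int poly. q \<noteq> 0 \<and> fps_of_poly q * H = fps_of_poly p \<and>
        degree p \<le> d * sN \<and> degree q \<le> d * sN"
  proof (cases "H = hsr UNIV")
    case False
    then show ?thesis using H inF by blast
  next
    case True
    have RF: "hsr (R_plus Rg) \<in> hsr ` F" using FRp by blast
    show ?thesis
    proof (cases "hsr (R_plus Rg) = 0")
      case True
      then have "H = fps_of_poly [:c0:]" using \<open>H = hsr UNIV\<close> hs_UNIV' by (simp add: fps_of_poly_const)
      then show ?thesis by (intro exI[of _ "[:c0:]"] exI[of _ 1]) simp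
    next
      case False
      then have "hsr (R_plus Rg) \<in> Hn" using RF unfolding Hn_def by blast
      then obtain i where i: "i < sN" "en i = hsr (R_plus Rg)" using en_surj by blast
      obtain p where p: "fps_of_poly (det AM) * en i = fps_of_poly p" "degree p \<le> d * sN"
        using solve_row[OF i(1)] by blast
      have "fps_of_poly (det AM) * H = fps_of_poly (det AM) * fps_const c0 + fps_of_poly p"
        using \<open>H = hsr UNIV\<close> hs_UNIV' p(1) i(2) by (simp add: algebra_simps)
      also have "\<dots> = fps_of_poly (Polynomial.smult c0 (det AM) + p)"
        by (simp add: fps_of_poly_add fps_of_poly_smult mult.commute)
      finally have eq: "fps_of_poly (det AM) * H = fps_of_poly (Polynomial.smult c0 (det AM) + p)" .
      have "degree (Polynomial.smult c0 (det AM) + p) \<le> d * sN"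
        using deg_detAM p(2) degree_smult_le[of c0 "det AM"] by (intro degree_add_le) auto
      then show ?thesis using eq detAM_ne0 deg_detAM by blast
    qed
  qed
qed

end

theorem mainTheorem15:
  fixes scale :: "'k::field \<Rightarrow> 'a::ring_1 \<Rightarrow> 'a"
    and Rg :: "nat \<Rightarrow> 'a set"
    and F :: "'a set set"
    and d s :: nat
  assumes "standard_algebra scale Rg"
    and "rate_filtration_of_degree Rg F d"
    and "finite (hilbert_series scale Rg ` F)"
    and "s = card {h \<in> hilbert_series scale Rg ` F. h \<noteq> 0}"
  shows "\<forall>H \<in> insert (hilbert_series scale Rg UNIV) (hilbert_series scale Rg ` F).
           \<exists>p q :: int poly. q \<noteq> 0 \<and> fps_of_poly q * H = fps_of_poly p \<and>
             degree p \<le> d * s \<and> degree q \<le> d * s"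
proof -
  interpret mainctx scale Rg F d
  proof (unfold_locales)
    show "standard_algebra scale Rg" by (rule assms(1))
    show "rate_filtration_of_degree Rg F d" by (rule assms(2))
    show "finite (hilbert_series scale Rg ` F)" by (rule assms(3))
  qed
  have "s = sN" unfolding sN_def Hn_def using assms(4) by simp
  then show ?thesis using main_loc by simp
qed

end
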